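(* Let $$p=\Big(\mathbf X^{\lambda_0^{(1)}}-\mathbf X^{\lambda_1^{(1)}}\Big)\Big(\mathbf X^{\lambda_0^{(2)}}-\mathbf X^{\lambda_1^{(2)}}\Big)\cdots\Big(\mathbf X^{\lambda_0^{(k)}}-\mathbf X^{\lambda_1^{(k)}}\Big)\sum_{j\in J}e_j\mathbf X^{\alpha_j}\in\mathbb Z[X_1,\dots,X_n],$$ where the polynomials $\mathbf X^{\lambda_0^{(i)}}-\mathbf X^{\lambda_1^{(i)}}$ ($i=1,\dots,k$) are pairwise distinct irreducible polynomials, all $\lambda_b^{(i)}$ ($b\in\{0,1\}$) are nonzero elements of $\mathbb N_0^n$, $J$ is a finite nonempty index set, $e_j\in\{1,-1\}$ and $\alpha_j\in\mathbb N_0^n$ for $j\in J$, and $\alpha_j\ne\alpha_{j'}$ whenever $e_j\ne e_{j'}$. Then $p$ contains at least $k+1$ minimal monomials.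
   Context: $\mathbb N_0$ denotes the nonnegative integers; for $\alpha\in\mathbb N_0^n$, $\mathbf X^\alpha=\prod_{i=1}^nX_i^{(\alpha)_i}$. Write a nonzero polynomial $p\in\mathbb Z[X_1,\dots,X_n]$ as $p=\sum_{\beta}c_\beta\mathbf X^\beta$ with integer coefficients; a monomial $\mathbf X^\beta$ with $c_\beta\neq 0$ is minimal in $p$ if there is no $\beta'\ne\beta$ with $c_{\beta'}\ne0$ and $\beta'\le\beta$ in the componentwise (product) order on $\mathbb N_0^n$. The number of minimal monomials of $p$ is the number of such exponent vectors $\beta$. *)

theory Defs
  imports "HOL-Library.Poly_Mapping" "HOL-Computational_Algebra.Factorial_Ring"
begin

text \<open>Polynomials in \<open>\<int>[X_i : i \<in> 'n]\<close> with a finite index type 'n (so n = CARD('n)):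
  exponent vectors are \<open>'n \<Rightarrow>\<^sub>0 nat\<close>, polynomials are \<open>('n \<Rightarrow>\<^sub>0 nat) \<Rightarrow>\<^sub>0 int\<close>.
  The monomial X^alpha is \<open>Poly_Mapping.single alpha 1\<close>.\<close>

type_synonym 'n intpoly = "('n \<Rightarrow>\<^sub>0 nat) \<Rightarrow>\<^sub>0 int"

text \<open>Componentwise (product) order on exponent vectors (NOT the library's lexicographic order).\<close>
definition le_comp :: "('n \<Rightarrow>\<^sub>0 nat) \<Rightarrow> ('n \<Rightarrow>\<^sub>0 nat) \<Rightarrow> bool" where
  "le_comp a b \<longleftrightarrow> (\<forall>i. Poly_Mapping.lookup a i \<le> Poly_Mapping.lookup b i)"

definition minimal_monomials :: "'n intpoly \<Rightarrow> ('n \<Rightarrow>\<^sub>0 nat) set" where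
  "minimal_monomials p = {\<beta>. Poly_Mapping.lookup p \<beta> \<noteq> 0 \<and>
     \<not> (\<exists>\<beta>'. \<beta>' \<noteq> \<beta> \<and> Poly_Mapping.lookup p \<beta>' \<noteq> 0 \<and> le_comp \<beta>' \<beta>)}"

end

theory Submission imports Defs Complex_Main begin

lemma lookup_single_mult_shift:
  fixes H :: "('n \<Rightarrow>\<^sub>0 nat) \<Rightarrow>\<^sub>0 int"
  shows "Poly_Mapping.lookup (Poly_Mapping.single a x * H) (a + q) = x * Poly_Mapping.lookup H q"
proof -
  have "Poly_Mapping.lookup (Poly_Mapping.single a x * H) (a + q)
     = (\<Sum>l. (x when a = l) * (\<Sum>q'. Poly_Mapping.lookup H q' when a + q = l + q'))"
    by (simp add: lookup_mult lookup_single)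
  also have "\<dots> = x * (\<Sum>q'. Poly_Mapping.lookup H q' when a + q = a + q')"
    by (simp add: when_mult)
  also have "(\<Sum>q'. Poly_Mapping.lookup H q' when a + q = a + q') = (\<Sum>q'. Poly_Mapping.lookup H q' when q' = q)"
    by (rule Sum_any.cong) (auto simp: when_def)
  finally show ?thesis by simp
qed

lemma lookup_single_mult_noshift:
  fixes H :: "('n \<Rightarrow>\<^sub>0 nat) \<Rightarrow>\<^sub>0 int"
  assumes "\<And>q. k \<noteq> a + q"
  shows "Poly_Mapping.lookup (Poly_Mapping.single a x * H) k = 0"
proof -
  have "Poly_Mapping.lookup (Poly_Mapping.single a x * H) k
     = (\<Sum>l. (x when a = l) * (\<Sum>q'. Poly_Mapping.lookup H q' when k = l + q'))"
    by (simp add: lookup_mult lookup_single)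
  also have "\<dots> = x * (\<Sum>q'. Poly_Mapping.lookup H q' when k = a + q')"
    by (simp add: when_mult)
  also have "(\<Sum>q'. Poly_Mapping.lookup H q' when k = a + q') = 0"
    using assms by (simp add: when_def)
  finally show ?thesis by simp
qed

lemma keys_shift:
  fixes H :: "('n \<Rightarrow>\<^sub>0 nat) \<Rightarrow>\<^sub>0 int"
  assumes "x \<noteq> 0"
  shows "Poly_Mapping.keys (Poly_Mapping.single a x * H) = (+) a ` Poly_Mapping.keys H"
proof (rule set_eqI)
  fix k
  show "k \<in> Poly_Mapping.keys (Poly_Mapping.single a x * H) \<longleftrightarrow> k \<in> (+) a ` Poly_Mapping.keys H"
  proof (cases "\<exists>q. k = a + q")
    case True
    then obtain q where k: "k = a + q" by blast
    have "\<And>q'. a + q' = a + q \<Longrightarrow> q' = q" by simp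
    then show ?thesis using assms by (auto simp: k lookup_single_mult_shift in_keys_iff)
  next
    case False
    then show ?thesis by (auto simp: in_keys_iff lookup_single_mult_noshift)
  qed
qed

definition dotw :: "('n::finite \<Rightarrow> real) \<Rightarrow> ('n \<Rightarrow>\<^sub>0 nat) \<Rightarrow> real" where
  "dotw w \<beta> = (\<Sum>l\<in>UNIV. w l * real (Poly_Mapping.lookup \<beta> l))"

lemma dotw_add: "dotw w (\<beta> + \<gamma>) = dotw w \<beta> + dotw w \<gamma>"
  by (simp add: dotw_def lookup_add distrib_left sum.distrib)

lemma dotw_zero[simp]: "dotw w 0 = 0"
  by (simp add: dotw_def)

lemma dotw_sum_const: "dotw w (\<Sum>i<r. b) = real r * dotw w b"
  by (induction r) (simp_all add: dotw_add algebra_simps)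

definition ipw :: "('n::finite \<Rightarrow> real) \<Rightarrow> ('n \<Rightarrow> real) \<Rightarrow> real" where
  "ipw w x = (\<Sum>l\<in>UNIV. w l * x l)"

definition dvec :: "('n \<Rightarrow>\<^sub>0 nat) \<Rightarrow> ('n \<Rightarrow>\<^sub>0 nat) \<Rightarrow> 'n \<Rightarrow> real" where
  "dvec a b l = real (Poly_Mapping.lookup a l) - real (Poly_Mapping.lookup b l)"

lemma ipw_dvec: "ipw w (dvec a b) = dotw w a - dotw w b"
  by (simp add: ipw_def dvec_def dotw_def right_diff_distrib sum_subtractf)

definition argm :: "('n::finite \<Rightarrow> real) \<Rightarrow> ('n \<Rightarrow>\<^sub>0 nat) set \<Rightarrow> ('n \<Rightarrow>\<^sub>0 nat) set" where
  "argm w S = {\<beta>\<in>S. \<forall>\<beta>'\<in>S. dotw w \<beta> \<le> dotw w \<beta>'}"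

lemma argm_nonempty:
  assumes "finite S" "S \<noteq> {}" shows "argm w S \<noteq> {}"
proof -
  have "Min (dotw w ` S) \<in> dotw w ` S" using Min_in[of "dotw w ` S"] assms by auto
  then obtain \<beta> where "\<beta> \<in> S" "dotw w \<beta> = Min (dotw w ` S)" by auto
  then have "\<beta> \<in> argm w S" using assms by (auto simp: argm_def)
  then show ?thesis by blast
qed

lemma argm_subset: "argm w S \<subseteq> S" by (auto simp: argm_def)

definition Fb :: "('n \<Rightarrow>\<^sub>0 nat) \<Rightarrow> ('n \<Rightarrow>\<^sub>0 nat) \<Rightarrow> ('n \<Rightarrow>\<^sub>0 nat) \<Rightarrow>\<^sub>0 int" where
  "Fb a b = Poly_Mapping.single a 1 - Poly_Mapping.single b 1"

lemma lookup_Fb_mult: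
  "Poly_Mapping.lookup (Fb a b * h) k =
     Poly_Mapping.lookup (Poly_Mapping.single a 1 * h) k - Poly_Mapping.lookup (Poly_Mapping.single b 1 * h) k"
  by (simp add: Fb_def left_diff_distrib lookup_minus)

lemma keys_Fb_mult:
  "Poly_Mapping.keys (Fb a b * h) \<subseteq> (+) a ` Poly_Mapping.keys h \<union> (+) b ` Poly_Mapping.keys h"
proof
  fix k assume k: "k \<in> Poly_Mapping.keys (Fb a b * h)"
  show "k \<in> (+) a ` Poly_Mapping.keys h \<union> (+) b ` Poly_Mapping.keys h"
  proof (rule ccontr)
    assume "\<not> ?thesis"
    then have "k \<notin> Poly_Mapping.keys (Poly_Mapping.single a 1 * h)"
      "k \<notin> Poly_Mapping.keys (Poly_Mapping.single b 1 * h)"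
      by (simp_all add: keys_shift)
    then show False using k by (simp add: in_keys_iff lookup_Fb_mult)
  qed
qed

lemma argm_Fb:
  fixes h :: "'n::finite intpoly"
  assumes h: "h \<noteq> 0" and ab: "dotw w a > dotw w b"
  shows "argm w (Poly_Mapping.keys (Fb a b * h)) = (+) b ` argm w (Poly_Mapping.keys h)"
proof -
  let ?K = "Poly_Mapping.keys h"
  have fin: "finite ?K" by simp
  have ne: "?K \<noteq> {}" using h by simp
  obtain \<gamma>0 where g0: "\<gamma>0 \<in> argm w ?K" using argm_nonempty[OF fin ne] by blast
  have mem: "b + \<gamma> \<in> Poly_Mapping.keys (Fb a b * h)" if g: "\<gamma> \<in> argm w ?K" for \<gamma>
  proof -
    have "Poly_Mapping.lookup (Poly_Mapping.single a 1 * h) (b + \<gamma>) = 0"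
    proof (cases "\<exists>q. b + \<gamma> = a + q")
      case True
      then obtain q where q: "b + \<gamma> = a + q" by blast
      have "dotw w q < dotw w \<gamma>"
        using ab arg_cong[OF q, of "dotw w"] by (simp add: dotw_add)
      then have "q \<notin> ?K" using g by (auto simp: argm_def)
      then show ?thesis by (simp add: q lookup_single_mult_shift in_keys_iff)
    next
      case False then show ?thesis by (auto intro: lookup_single_mult_noshift)
    qed
    moreover have "\<gamma> \<in> ?K" using g by (auto simp: argm_def)
    ultimately show ?thesis
      by (simp add: in_keys_iff lookup_Fb_mult lookup_single_mult_shift)
  qed
  have lower: "dotw w b + dotw w \<gamma>0 \<le> dotw w k" if k: "k \<in> Poly_Mapping.keys (Fb a b * h)" for k
  proof -
    from keys_Fb_mult k obtain q where q: "q \<in> ?K" "k = a + q \<or> k = b + q" by blast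
    then have "dotw w \<gamma>0 \<le> dotw w q" using g0 by (auto simp: argm_def)
    then show ?thesis using q ab by (auto simp: dotw_add)
  qed
  show ?thesis
  proof (rule set_eqI, rule iffI)
    fix k assume k: "k \<in> argm w (Poly_Mapping.keys (Fb a b * h))"
    then have kk: "k \<in> Poly_Mapping.keys (Fb a b * h)" by (auto simp: argm_def)
    have kle: "dotw w k \<le> dotw w (b + \<gamma>0)" using k mem[OF g0] by (auto simp: argm_def)
    from keys_Fb_mult kk obtain q where q: "q \<in> ?K" "k = a + q \<or> k = b + q" by blast
    have "dotw w \<gamma>0 \<le> dotw w q" using g0 q by (auto simp: argm_def)
    then have kb: "k = b + q" using q kle ab by (auto simp: dotw_add)
    have "q \<in> argm w ?K"
      using q kle kb g0 by (auto simp: argm_def dotw_add)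
    then show "k \<in> (+) b ` argm w ?K" using kb by blast
  next
    fix k assume "k \<in> (+) b ` argm w ?K"
    then obtain \<gamma> where g: "\<gamma> \<in> argm w ?K" "k = b + \<gamma>" by blast
    have "dotw w \<gamma> = dotw w \<gamma>0" using g g0 by (auto simp: argm_def intro: antisym)
    then show "k \<in> argm w (Poly_Mapping.keys (Fb a b * h))"
      using mem[OF g(1)] lower g by (auto simp: argm_def dotw_add)
  qed
qed

lemma Fb_swap: "Fb a b * h = - (Fb b a * h)"
  by (simp add: Fb_def algebra_simps)

lemma argm_Fb':
  fixes h :: "'n::finite intpoly"
  assumes h: "h \<noteq> 0" and ab: "dotw w a < dotw w b"
  shows "argm w (Poly_Mapping.keys (Fb a b * h)) = (+) a ` argm w (Poly_Mapping.keys h)"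
  using argm_Fb[OF h, of w a b] ab by (simp add: Fb_swap[of a b] keys_minus)

lemma dvec_pos:
  fixes a b :: "'n::finite \<Rightarrow>\<^sub>0 nat"
  assumes "a \<noteq> b" shows "ipw (dvec a b) (dvec a b) > 0"
proof -
  obtain l where l: "Poly_Mapping.lookup a l \<noteq> Poly_Mapping.lookup b l"
    using assms by (meson poly_mapping_eqI)
  have "0 < dvec a b l * dvec a b l" using l by (auto simp: dvec_def zero_less_mult_iff)
  also have "\<dots> \<le> ipw (dvec a b) (dvec a b)"
    unfolding ipw_def by (rule member_le_sum) auto
  finally show ?thesis .
qed

lemma Fb_mult_nonzero:
  fixes h :: "'n::finite intpoly"
  assumes h: "h \<noteq> 0" and ab: "a \<noteq> b"
  shows "Fb a b * h \<noteq> 0"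
proof -
  have "dotw (dvec a b) a > dotw (dvec a b) b"
    using dvec_pos[OF ab] by (simp add: ipw_dvec)
  then have "argm (dvec a b) (Poly_Mapping.keys (Fb a b * h)) \<noteq> {}"
    using argm_Fb[OF h] argm_nonempty[of "Poly_Mapping.keys h"] h by simp
  then show ?thesis by (auto simp: argm_def)
qed

lemma Fb_pow_mult_nonzero:
  fixes h :: "'n::finite intpoly"
  assumes h: "h \<noteq> 0" and ab: "a \<noteq> b"
  shows "Fb a b ^ r * h \<noteq> 0"
  by (induction r) (simp_all add: h mult.assoc Fb_mult_nonzero ab)

lemma argm_Fb_pow:
  fixes h :: "'n::finite intpoly"
  assumes h: "h \<noteq> 0" and ab: "dotw w a > dotw w b"
  shows "argm w (Poly_Mapping.keys (Fb a b ^ r * h)) = (+) (\<Sum>i<r. b) ` argm w (Poly_Mapping.keys h)"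
proof (induction r)
  case 0 then show ?case by simp
next
  case (Suc r)
  have ne: "a \<noteq> b" using ab by auto
  have "argm w (Poly_Mapping.keys (Fb a b ^ Suc r * h)) = argm w (Poly_Mapping.keys (Fb a b * (Fb a b ^ r * h)))"
    by (simp add: mult.assoc)
  also have "\<dots> = (+) b ` argm w (Poly_Mapping.keys (Fb a b ^ r * h))"
    by (rule argm_Fb[OF Fb_pow_mult_nonzero[OF h ne] ab])
  also have "\<dots> = (+) (\<Sum>i<Suc r. b) ` argm w (Poly_Mapping.keys h)"
    unfolding Suc image_image by (simp add: add_ac)
  finally show ?case .
qed

lemma argm_Fb_pow':
  fixes h :: "'n::finite intpoly"
  assumes h: "h \<noteq> 0" and ab: "dotw w a < dotw w b"
  shows "argm w (Poly_Mapping.keys (Fb a b ^ r * h)) = (+) (\<Sum>i<r. a) ` argm w (Poly_Mapping.keys h)"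
proof -
  have pm: "\<And>h. Fb a b ^ r * h = Fb b a ^ r * h \<or> Fb a b ^ r * h = - (Fb b a ^ r * h)"
  proof (induction r)
    case 0 then show ?case by simp
  next
    case (Suc r)
    have 1: "Fb a b ^ Suc r * h = - (Fb a b ^ r * (Fb b a * h))"
      by (simp only: power_Suc2 mult.assoc Fb_swap[of a b h] mult_minus_right)
    have 2: "Fb b a ^ Suc r * h = Fb b a ^ r * (Fb b a * h)"
      by (simp only: power_Suc2 mult.assoc)
    from Suc.IH[of "Fb b a * h"] show ?case unfolding 1 2 by auto
  qed
  have kk: "Poly_Mapping.keys (Fb a b ^ r * h) = Poly_Mapping.keys (Fb b a ^ r * h)"
    using pm[of h] by (metis keys_minus)
  show ?thesis unfolding kk by (rule argm_Fb_pow[OF h ab])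
qed

lemma keys_diff_sub: "Poly_Mapping.keys (x - y) \<subseteq> Poly_Mapping.keys x \<union> Poly_Mapping.keys (y :: 'n intpoly)"
  by (auto simp: in_keys_iff lookup_minus)

lemma keys_Fb_pow_mult:
  fixes X :: "'n::finite intpoly"
  assumes hom: "dotw v a = dotw v b"
  shows "Poly_Mapping.keys (Fb a b ^ r * X) \<subseteq> {c + x | c x. dotw v c = real r * dotw v a \<and> x \<in> Poly_Mapping.keys X}"
proof (induction r)
  case 0 then show ?case by force
next
  case (Suc r)
  have kF: "Poly_Mapping.keys (Fb a b) \<subseteq> {a, b}"
    using keys_diff_sub[of "Poly_Mapping.single a 1" "Poly_Mapping.single b 1"] by (auto simp: Fb_def)
  have "Poly_Mapping.keys (Fb a b ^ Suc r * X) = Poly_Mapping.keys (Fb a b * (Fb a b ^ r * X))"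
    by (simp add: mult.assoc)
  also have "\<dots> \<subseteq> {a' + y | a' y. a' \<in> Poly_Mapping.keys (Fb a b) \<and> y \<in> Poly_Mapping.keys (Fb a b ^ r * X)}"
    by (rule keys_mult)
  also have "\<dots> \<subseteq> {c + x | c x. dotw v c = real (Suc r) * dotw v a \<and> x \<in> Poly_Mapping.keys X}"
  proof
    fix z assume "z \<in> {a' + y | a' y. a' \<in> Poly_Mapping.keys (Fb a b) \<and> y \<in> Poly_Mapping.keys (Fb a b ^ r * X)}"
    then obtain a' y where z: "z = a' + y" "a' \<in> {a, b}" "y \<in> Poly_Mapping.keys (Fb a b ^ r * X)"
      using kF by blast
    from z(3) Suc obtain c x where y: "y = c + x" "dotw v c = real r * dotw v a" "x \<in> Poly_Mapping.keys X"
      by blast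
    have "z = (a' + c) + x" using z y by (simp add: add_ac)
    moreover have "dotw v (a' + c) = real (Suc r) * dotw v a"
      using z(2) y(2) hom by (auto simp: dotw_add algebra_simps)
    ultimately show "z \<in> {c + x | c x. dotw v c = real (Suc r) * dotw v a \<and> x \<in> Poly_Mapping.keys X}"
      using y(3) by blast
  qed
  finally show ?case .
qed

definition low :: "('n::finite \<Rightarrow> real) \<Rightarrow> 'n intpoly \<Rightarrow> 'n intpoly" where
  "low v h = Poly_Mapping.mapp (\<lambda>k x. if k \<in> argm v (Poly_Mapping.keys h) then x else 0) h"

lemma lookup_low: "Poly_Mapping.lookup (low v h) k = (if k \<in> argm v (Poly_Mapping.keys h) then Poly_Mapping.lookup h k else 0)"
  by (auto simp: low_def lookup_mapp in_keys_iff argm_def)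

lemma keys_low: "Poly_Mapping.keys (low v h) = argm v (Poly_Mapping.keys h)"
  by (auto simp: in_keys_iff lookup_low argm_def split: if_splits)

lemma low_nonzero: "h \<noteq> 0 \<Longrightarrow> low v h \<noteq> 0"
  using argm_nonempty[of "Poly_Mapping.keys h" v] keys_low[of v h] by auto

lemma low_F:
  fixes h :: "'n::finite intpoly"
  assumes hom: "dotw v a = dotw v b" and h: "h \<noteq> 0"
  shows "Poly_Mapping.keys (Fb a b ^ r * low v h) \<subseteq> argm v (Poly_Mapping.keys (Fb a b ^ r * h))"
proof
  fix \<beta> assume \<beta>: "\<beta> \<in> Poly_Mapping.keys (Fb a b ^ r * low v h)"
  obtain \<gamma>0 where g0: "\<gamma>0 \<in> argm v (Poly_Mapping.keys h)"
    using argm_nonempty[of "Poly_Mapping.keys h" v] h by auto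
  let ?m = "dotw v \<gamma>0"
  have lowval: "dotw v x = ?m" if "x \<in> Poly_Mapping.keys (low v h)" for x
    using that g0 by (auto simp: keys_low argm_def intro: antisym)
  have Rval: "dotw v x > ?m" if "x \<in> Poly_Mapping.keys (h - low v h)" for x
  proof -
    have "Poly_Mapping.lookup h x \<noteq> 0" "x \<notin> argm v (Poly_Mapping.keys h)"
      using that by (auto simp: in_keys_iff lookup_minus lookup_low split: if_splits)
    then show ?thesis using g0 by (auto simp: argm_def in_keys_iff)
  qed
  have allval: "dotw v x \<ge> ?m" if "x \<in> Poly_Mapping.keys h" for x
    using that g0 by (auto simp: argm_def)
  from keys_Fb_pow_mult[OF hom, of r "low v h"] \<beta> obtain c x where
    cx: "\<beta> = c + x" "dotw v c = real r * dotw v a" "x \<in> Poly_Mapping.keys (low v h)" by blast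
  have bval: "dotw v \<beta> = real r * dotw v a + ?m" using cx lowval by (simp add: dotw_add)
  have "\<beta> \<notin> Poly_Mapping.keys (Fb a b ^ r * (h - low v h))"
  proof
    assume "\<beta> \<in> Poly_Mapping.keys (Fb a b ^ r * (h - low v h))"
    from keys_Fb_pow_mult[OF hom, of r "h - low v h"] this obtain c' x' where
      cx': "\<beta> = c' + x'" "dotw v c' = real r * dotw v a" "x' \<in> Poly_Mapping.keys (h - low v h)" by blast
    have "dotw v x' > ?m" using Rval[OF cx'(3)] .
    then show False using cx' bval by (simp add: dotw_add)
  qed
  moreover have "Fb a b ^ r * h = Fb a b ^ r * low v h + Fb a b ^ r * (h - low v h)"
    by (simp add: algebra_simps)
  ultimately have inK: "\<beta> \<in> Poly_Mapping.keys (Fb a b ^ r * h)"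
    using \<beta> by (auto simp: in_keys_iff lookup_add)
  have "dotw v \<beta> \<le> dotw v \<beta>'" if "\<beta>' \<in> Poly_Mapping.keys (Fb a b ^ r * h)" for \<beta>'
  proof -
    from keys_Fb_pow_mult[OF hom, of r h] that obtain c' x' where
      "\<beta>' = c' + x'" "dotw v c' = real r * dotw v a" "x' \<in> Poly_Mapping.keys h" by blast
    then show ?thesis using allval bval by (auto simp: dotw_add)
  qed
  then show "\<beta> \<in> argm v (Poly_Mapping.keys (Fb a b ^ r * h))" using inK by (auto simp: argm_def)
qed

lemma chain_low:
  fixes h :: "'n::finite intpoly"
  assumes fin: "finite V" and hom: "\<And>v. v \<in> V \<Longrightarrow> dotw v a = dotw v b" and h: "h \<noteq> 0"
  shows "\<exists>h'. h' \<noteq> 0 \<and> Poly_Mapping.keys (Fb a b ^ r * h') \<subseteq> Poly_Mapping.keys (Fb a b ^ r * h) \<and>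
     (\<forall>v\<in>V. \<forall>\<beta>\<in>Poly_Mapping.keys (Fb a b ^ r * h'). \<forall>\<beta>'\<in>Poly_Mapping.keys (Fb a b ^ r * h'). dotw v \<beta> = dotw v \<beta>')"
  using fin hom
proof (induction V rule: finite_induct)
  case empty then show ?case using h by blast
next
  case (insert v V)
  then obtain h' where h': "h' \<noteq> 0" "Poly_Mapping.keys (Fb a b ^ r * h') \<subseteq> Poly_Mapping.keys (Fb a b ^ r * h)"
    "\<forall>v\<in>V. \<forall>\<beta>\<in>Poly_Mapping.keys (Fb a b ^ r * h'). \<forall>\<beta>'\<in>Poly_Mapping.keys (Fb a b ^ r * h'). dotw v \<beta> = dotw v \<beta>'"
    by auto
  have sub: "Poly_Mapping.keys (Fb a b ^ r * low v h') \<subseteq> argm v (Poly_Mapping.keys (Fb a b ^ r * h'))"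
    by (rule low_F[OF insert.prems[of v] h'(1)]) simp
  show ?case
  proof (intro exI conjI)
    show "low v h' \<noteq> 0" using low_nonzero[OF h'(1)] .
    show "Poly_Mapping.keys (Fb a b ^ r * low v h') \<subseteq> Poly_Mapping.keys (Fb a b ^ r * h)"
      using sub h'(2) argm_subset by blast
    show "\<forall>u\<in>insert v V. \<forall>\<beta>\<in>Poly_Mapping.keys (Fb a b ^ r * low v h'). \<forall>\<beta>'\<in>Poly_Mapping.keys (Fb a b ^ r * low v h'). dotw u \<beta> = dotw u \<beta>'"
    proof (intro ballI)
      fix u \<beta> \<beta>' assume u: "u \<in> insert v V" and b: "\<beta> \<in> Poly_Mapping.keys (Fb a b ^ r * low v h')"
        and b': "\<beta>' \<in> Poly_Mapping.keys (Fb a b ^ r * low v h')"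
      show "dotw u \<beta> = dotw u \<beta>'"
      proof (cases "u = v")
        case True then show ?thesis using sub b b' by (auto simp: argm_def intro: antisym)
      next
        case False then show ?thesis using u h'(3) sub b b' argm_subset by blast
      qed
    qed
  qed
qed

lemma dotw_uminus: "dotw (\<lambda>l. - w l) \<beta> = - dotw w \<beta>"
  by (simp add: dotw_def sum_negf)

lemma argm_disj:
  fixes h :: "'n::finite intpoly"
  assumes h: "h \<noteq> 0" and r: "r \<ge> 1" and w: "dotw w a > dotw w b" and w': "dotw w' a < dotw w' b"
  shows "argm w (Poly_Mapping.keys (Fb a b ^ r * h)) \<inter> argm w' (Poly_Mapping.keys (Fb a b ^ r * h)) = {}"
proof (rule ccontr)
  assume "\<not> ?thesis"
  then obtain \<beta> where b1: "\<beta> \<in> argm w (Poly_Mapping.keys (Fb a b ^ r * h))"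
    and b2: "\<beta> \<in> argm w' (Poly_Mapping.keys (Fb a b ^ r * h))" by blast
  from b1 obtain \<gamma>1 where g1: "\<gamma>1 \<in> argm w (Poly_Mapping.keys h)" "\<beta> = (\<Sum>i<r. b) + \<gamma>1"
    using argm_Fb_pow[OF h w] by blast
  from b2 obtain \<gamma>2 where g2: "\<gamma>2 \<in> argm w' (Poly_Mapping.keys h)" "\<beta> = (\<Sum>i<r. a) + \<gamma>2"
    using argm_Fb_pow'[OF h w'] by blast
  have "\<gamma>2 \<in> Poly_Mapping.keys h" using g2 argm_subset by blast
  then have le: "dotw w \<gamma>1 \<le> dotw w \<gamma>2" using g1 by (auto simp: argm_def)
  have "real r * dotw w b + dotw w \<gamma>1 = real r * dotw w a + dotw w \<gamma>2"
    using g1(2) g2(2) by (metis dotw_add dotw_sum_const)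
  moreover have "real r * dotw w b < real r * dotw w a" using r w by simp
  ultimately show False using le by linarith
qed

lemma card_keys_ge2:
  fixes h :: "'n::finite intpoly"
  assumes h: "h \<noteq> 0" and r: "r \<ge> 1" and ab: "a \<noteq> b"
  shows "2 \<le> card (Poly_Mapping.keys (Fb a b ^ r * h))"
proof -
  let ?w = "dvec a b" and ?w' = "\<lambda>l. - dvec a b l" and ?K = "Poly_Mapping.keys (Fb a b ^ r * h)"
  have w: "dotw ?w a > dotw ?w b" using dvec_pos[OF ab] by (simp add: ipw_dvec)
  then have w': "dotw ?w' a < dotw ?w' b" by (simp add: dotw_uminus)
  have ne: "?K \<noteq> {}" using Fb_pow_mult_nonzero[OF h ab] by simp
  obtain x where x: "x \<in> argm ?w ?K" using argm_nonempty[OF finite_keys ne] by blast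
  obtain y where y: "y \<in> argm ?w' ?K" using argm_nonempty[OF finite_keys ne] by blast
  have "x \<noteq> y" using argm_disj[OF h r w w'] x y by blast
  moreover have "x \<in> ?K" "y \<in> ?K" using x y argm_subset by blast+
  ultimately have "{x, y} \<subseteq> ?K" "card {x, y} = 2" by auto
  then show ?thesis by (metis card_mono finite_keys)
qed

definition dI :: "('n \<Rightarrow>\<^sub>0 nat) \<Rightarrow> ('n \<Rightarrow>\<^sub>0 nat) \<Rightarrow> 'n \<Rightarrow> int" where
  "dI a b l = int (Poly_Mapping.lookup a l) - int (Poly_Mapping.lookup b l)"

definition dotI :: "('n::finite \<Rightarrow> int) \<Rightarrow> ('n \<Rightarrow>\<^sub>0 nat) \<Rightarrow> int" where
  "dotI c \<beta> = (\<Sum>l\<in>UNIV. c l * int (Poly_Mapping.lookup \<beta> l))"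

lemma dotI_add: "dotI c (\<beta> + \<gamma>) = dotI c \<beta> + dotI c \<gamma>"
  by (simp add: dotI_def lookup_add distrib_left sum.distrib)

definition Der :: "('n::finite \<Rightarrow> int) \<Rightarrow> 'n intpoly \<Rightarrow> 'n intpoly" where
  "Der c h = Poly_Mapping.mapp (\<lambda>k x. dotI c k * x) h"

lemma lookup_Der: "Poly_Mapping.lookup (Der c h) k = dotI c k * Poly_Mapping.lookup h k"
  by (simp add: Der_def lookup_mapp in_keys_iff when_def)

lemma Der_diff: "Der c (u - v) = Der c u - Der c v"
  by (rule poly_mapping_eqI) (simp add: lookup_Der lookup_minus algebra_simps)

lemma Der_add: "Der c (u + v) = Der c u + Der c v"
  by (rule poly_mapping_eqI) (simp add: lookup_Der lookup_add algebra_simps)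

lemma Der_shift:
  fixes H :: "'n::finite intpoly"
  shows "Der c (Poly_Mapping.single a x * H) =
    Poly_Mapping.single a (x * dotI c a) * H + Poly_Mapping.single a x * Der c H"
proof (rule poly_mapping_eqI)
  fix k
  show "Poly_Mapping.lookup (Der c (Poly_Mapping.single a x * H)) k =
    Poly_Mapping.lookup (Poly_Mapping.single a (x * dotI c a) * H + Poly_Mapping.single a x * Der c H) k"
  proof (cases "\<exists>q. k = a + q")
    case True
    then obtain q where k: "k = a + q" by blast
    show ?thesis unfolding k lookup_add lookup_Der lookup_single_mult_shift dotI_add
      by (simp add: algebra_simps)
  next
    case False
    then show ?thesis
      by (simp add: lookup_add lookup_Der lookup_single_mult_noshift)
  qed
qed

lemma Der_Fb:
  fixes H :: "'n::finite intpoly"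
  shows "Der c (Fb a b * H) = Fb a b * Der c H +
     (Poly_Mapping.single a (dotI c a) - Poly_Mapping.single b (dotI c b)) * H"
proof -
  have "Fb a b * H = Poly_Mapping.single a 1 * H - Poly_Mapping.single b 1 * H"
    by (simp add: Fb_def left_diff_distrib)
  then have "Der c (Fb a b * H) = (Poly_Mapping.single a (1 * dotI c a) * H + Poly_Mapping.single a 1 * Der c H)
      - (Poly_Mapping.single b (1 * dotI c b) * H + Poly_Mapping.single b 1 * Der c H)"
    by (simp only: Der_diff Der_shift)
  then show ?thesis
    by (simp add: Fb_def left_diff_distrib)
qed

lemma Der_pow:
  fixes g :: "'n::finite intpoly"
  shows "\<exists>G. Der c (Fb a b ^ Suc r * g) = Fb a b ^ r * G"
proof (induction r)
  case 0
  show ?case using Der_Fb[of c a b g] by auto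
next
  case (Suc r)
  then obtain G where G: "Der c (Fb a b ^ Suc r * g) = Fb a b ^ r * G" by blast
  let ?e = "Poly_Mapping.single a (dotI c a) - Poly_Mapping.single b (dotI c b)"
  have "Der c (Fb a b ^ Suc (Suc r) * g) = Der c (Fb a b * (Fb a b ^ Suc r * g))"
    by (simp only: power_Suc mult.assoc)
  also have "\<dots> = Fb a b * (Fb a b ^ r * G) + ?e * (Fb a b ^ Suc r * g)"
    by (simp only: Der_Fb G)
  also have "\<dots> = Fb a b ^ Suc r * (G + ?e * g)"
    by (simp add: algebra_simps)
  finally show ?case by blast
qed

lemma lookup_single0_mult:
  fixes h :: "'n::finite intpoly"
  shows "Poly_Mapping.lookup (Poly_Mapping.single 0 s * h) k = s * Poly_Mapping.lookup h k"
  using lookup_single_mult_shift[of 0 s h k] by simp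

lemma descartes:
  fixes g :: "'n::finite intpoly"
  assumes ab: "a \<noteq> b"
  shows "g \<noteq> 0 \<Longrightarrow> inj_on (dotI (dI a b)) (Poly_Mapping.keys (Fb a b ^ r * g)) \<Longrightarrow>
     r + 1 \<le> card (Poly_Mapping.keys (Fb a b ^ r * g))"
proof (induction r arbitrary: g)
  case 0
  then show ?case by (simp add: Suc_le_eq card_gt_0_iff)
next
  case (Suc r)
  let ?h = "Fb a b ^ Suc r * g" and ?d = "dI a b"
  have two: "2 \<le> card (Poly_Mapping.keys ?h)" by (rule card_keys_ge2[OF Suc.prems(1) _ ab]) simp
  then obtain \<beta>0 where b0: "\<beta>0 \<in> Poly_Mapping.keys ?h"
    by (metis card.empty ex_in_conv not_numeral_le_zero)
  define s where "s = dotI ?d \<beta>0"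
  define T where "T = Der ?d ?h - Poly_Mapping.single 0 s * ?h"
  have lT: "Poly_Mapping.lookup T k = (dotI ?d k - s) * Poly_Mapping.lookup ?h k" for k
    unfolding T_def lookup_minus lookup_Der lookup_single0_mult by (simp add: algebra_simps)
  have kT: "Poly_Mapping.keys T = Poly_Mapping.keys ?h - {\<beta>0}"
  proof (rule set_eqI)
    fix k
    show "k \<in> Poly_Mapping.keys T \<longleftrightarrow> k \<in> Poly_Mapping.keys ?h - {\<beta>0}"
    proof (cases "k \<in> Poly_Mapping.keys ?h")
      case True
      have "dotI ?d k = s \<longleftrightarrow> k = \<beta>0"
        using inj_on_eq_iff[OF Suc.prems(2) True b0] by (simp add: s_def)
      then show ?thesis using True by (auto simp: in_keys_iff lT)
    next
      case False then show ?thesis by (auto simp: in_keys_iff lT)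
    qed
  qed
  have cT: "card (Poly_Mapping.keys T) = card (Poly_Mapping.keys ?h) - 1"
    using b0 by (simp add: kT)
  obtain G where G: "Der ?d ?h = Fb a b ^ r * G" using Der_pow by blast
  have TG: "T = Fb a b ^ r * (G - Poly_Mapping.single 0 s * (Fb a b * g))"
    unfolding T_def G by (simp add: right_diff_distrib power_Suc ac_simps)
  have "T \<noteq> 0" using cT two by (metis One_nat_def card.empty keys_zero not_numeral_le_zero diff_is_0_eq Suc_1 not_less_eq_eq)
  then have G0: "G - Poly_Mapping.single 0 s * (Fb a b * g) \<noteq> 0" using TG by auto
  have inj: "inj_on (dotI ?d) (Poly_Mapping.keys (Fb a b ^ r * (G - Poly_Mapping.single 0 s * (Fb a b * g))))"
    using Suc.prems(2) unfolding TG[symmetric] kT by (rule inj_on_subset) blast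
  from Suc.IH[OF G0 inj] have "r + 1 \<le> card (Poly_Mapping.keys T)" unfolding TG .
  then show ?case using cT two by simp
qed

definition vv :: "('n \<Rightarrow> int) \<Rightarrow> 'n \<Rightarrow> 'n \<Rightarrow> 'n \<Rightarrow> real" where
  "vv d l m = (\<lambda>x. (if x = l then real_of_int (d m) else 0) - (if x = m then real_of_int (d l) else 0))"

lemma dotw_vv: "dotw (vv d l m) \<beta> = real_of_int (d m) * real (Poly_Mapping.lookup \<beta> l) - real_of_int (d l) * real (Poly_Mapping.lookup \<beta> m)"
  by (simp add: dotw_def vv_def left_diff_distrib sum_subtractf if_distrib[of "\<lambda>x. x * _"] cong: if_cong)

lemma dvec_dI: "dvec a b = (\<lambda>l. real_of_int (dI a b l))"
  by (auto simp: dvec_def dI_def)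

lemma vv_hom: "dotw (vv (dI a b) l m) a = dotw (vv (dI a b) l m) b"
  by (simp add: dotw_vv dI_def algebra_simps)

lemma par:
  fixes d :: "'n::finite \<Rightarrow> int"
  assumes l0: "d l0 \<noteq> 0" and eq: "\<And>l m. dotw (vv d l m) \<beta> = dotw (vv d l m) \<beta>'"
  shows "\<forall>l. real (Poly_Mapping.lookup \<beta>' l) - real (Poly_Mapping.lookup \<beta> l) =
     (real (Poly_Mapping.lookup \<beta>' l0) - real (Poly_Mapping.lookup \<beta> l0)) / real_of_int (d l0) * real_of_int (d l)"
proof
  fix l
  have "real_of_int (d l0) * (real (Poly_Mapping.lookup \<beta>' l) - real (Poly_Mapping.lookup \<beta> l)) =
        real_of_int (d l) * (real (Poly_Mapping.lookup \<beta>' l0) - real (Poly_Mapping.lookup \<beta> l0))"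
    using eq[of l l0] by (simp add: dotw_vv algebra_simps)
  then show "real (Poly_Mapping.lookup \<beta>' l) - real (Poly_Mapping.lookup \<beta> l) =
     (real (Poly_Mapping.lookup \<beta>' l0) - real (Poly_Mapping.lookup \<beta> l0)) / real_of_int (d l0) * real_of_int (d l)"
    using l0 by (simp add: field_simps)
qed

lemma dotw_par:
  assumes "\<forall>l. real (Poly_Mapping.lookup \<beta>' l) - real (Poly_Mapping.lookup \<beta> l) = t * x l"
  shows "dotw w \<beta>' - dotw w \<beta> = t * ipw w x"
proof -
  have "dotw w \<beta>' - dotw w \<beta> = (\<Sum>l\<in>UNIV. w l * (real (Poly_Mapping.lookup \<beta>' l) - real (Poly_Mapping.lookup \<beta> l)))"
    by (simp add: dotw_def right_diff_distrib sum_subtractf)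
  also have "\<dots> = (\<Sum>l\<in>UNIV. t * (w l * x l))" using assms by (simp add: algebra_simps)
  finally show ?thesis by (simp add: ipw_def sum_distrib_left)
qed

lemma dotI_real: "real_of_int (dotI d \<beta>) = dotw (\<lambda>l. real_of_int (d l)) \<beta>"
  by (simp add: dotI_def dotw_def)

lemma ipw_self_pos:
  assumes "x l \<noteq> 0" shows "ipw x x > 0"
proof -
  have "0 < x l * x l" using assms by (simp add: zero_less_mult_iff) (metis linorder_neqE_linordered_idom)
  also have "\<dots> \<le> ipw x x" unfolding ipw_def by (rule member_le_sum) auto
  finally show ?thesis .
qed

definition UC :: "('n::finite \<Rightarrow> real) set \<Rightarrow> ('n \<Rightarrow>\<^sub>0 nat) set \<Rightarrow> ('n \<Rightarrow>\<^sub>0 nat) set" where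
  "UC C S = {\<beta>. \<exists>w\<in>C. \<beta> \<in> argm w S}"

lemma UC_subset: "UC C S \<subseteq> S" by (auto simp: UC_def argm_def)

lemma interior:
  fixes q :: "'n::finite intpoly"
  assumes ab: "a \<noteq> b" and q: "q \<noteq> 0" and hom: "dotw w0 a = dotw w0 b"
  shows "\<exists>X. X \<subseteq> argm w0 (Poly_Mapping.keys (Fb a b ^ r * q)) \<and> r - 1 \<le> card X \<and>
     (\<forall>\<beta>\<in>X. \<forall>w. ipw w (dvec a b) \<noteq> 0 \<longrightarrow> \<beta> \<notin> argm w (Poly_Mapping.keys (Fb a b ^ r * q)))"
proof -
  let ?d = "dI a b" and ?K = "Poly_Mapping.keys (Fb a b ^ r * q)"
  obtain l0 where "Poly_Mapping.lookup a l0 \<noteq> Poly_Mapping.lookup b l0"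
    using ab by (meson poly_mapping_eqI)
  then have l0: "?d l0 \<noteq> 0" by (simp add: dI_def)
  define V where "V = (\<lambda>(l, m). vv ?d l m) ` UNIV"
  have finV: "finite V" by (simp add: V_def)
  have homV: "\<And>v. v \<in> V \<Longrightarrow> dotw v a = dotw v b" unfolding V_def using vv_hom by fastforce
  have sub0: "Poly_Mapping.keys (Fb a b ^ r * low w0 q) \<subseteq> argm w0 ?K"
    by (rule low_F[OF hom q])
  obtain h' where h': "h' \<noteq> 0" "Poly_Mapping.keys (Fb a b ^ r * h') \<subseteq> Poly_Mapping.keys (Fb a b ^ r * low w0 q)"
    "\<forall>v\<in>V. \<forall>\<beta>\<in>Poly_Mapping.keys (Fb a b ^ r * h'). \<forall>\<beta>'\<in>Poly_Mapping.keys (Fb a b ^ r * h'). dotw v \<beta> = dotw v \<beta>'"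
    using chain_low[OF finV homV low_nonzero[OF q]] by blast
  define S where "S = Poly_Mapping.keys (Fb a b ^ r * h')"
  have SK: "S \<subseteq> argm w0 ?K" using h'(2) sub0 by (auto simp: S_def)
  have Sne: "S \<noteq> {}" using Fb_pow_mult_nonzero[OF h'(1) ab] by (simp add: S_def)
  have finS: "finite S" by (simp add: S_def)
  define t where "t = (\<lambda>\<beta> \<beta>'. (real (Poly_Mapping.lookup \<beta>' l0) - real (Poly_Mapping.lookup \<beta> l0)) / real_of_int (?d l0))"
  have parS: "\<forall>l. real (Poly_Mapping.lookup \<beta>' l) - real (Poly_Mapping.lookup \<beta> l) = t \<beta> \<beta>' * real_of_int (?d l)"
    if "\<beta> \<in> S" "\<beta>' \<in> S" for \<beta> \<beta>'
    unfolding t_def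
  proof (rule par[of "dI a b" l0, OF l0])
    fix l m
    have "vv ?d l m \<in> V" unfolding V_def by (rule image_eqI[where x="(l, m)"]) simp_all
    then show "dotw (vv ?d l m) \<beta> = dotw (vv ?d l m) \<beta>'"
      using h'(3) that unfolding S_def by blast
  qed
  let ?D = "ipw (\<lambda>l. real_of_int (?d l)) (\<lambda>l. real_of_int (?d l))"
  have Dpos: "?D > 0" by (rule ipw_self_pos[of _ l0]) (simp add: l0)
  have dI_diff: "real_of_int (dotI ?d \<beta>') - real_of_int (dotI ?d \<beta>) = t \<beta> \<beta>' * ?D"
    if "\<beta> \<in> S" "\<beta>' \<in> S" for \<beta> \<beta>'
    unfolding dotI_real by (rule dotw_par[OF parS[OF that]])
  have inj: "inj_on (dotI ?d) S"
  proof (rule inj_onI)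
    fix \<beta> \<beta>' assume b: "\<beta> \<in> S" "\<beta>' \<in> S" "dotI ?d \<beta> = dotI ?d \<beta>'"
    then have "t \<beta> \<beta>' = 0" using dI_diff[OF b(1,2)] Dpos by simp
    then have "\<forall>l. real (Poly_Mapping.lookup \<beta>' l) = real (Poly_Mapping.lookup \<beta> l)"
      using parS[OF b(1,2)] by simp
    then have "\<forall>l. Poly_Mapping.lookup \<beta> l = Poly_Mapping.lookup \<beta>' l" by simp
    then show "\<beta> = \<beta>'" by (intro poly_mapping_eqI) blast
  qed
  have cS: "r + 1 \<le> card S" unfolding S_def
    by (rule descartes[OF ab h'(1)]) (use inj in \<open>simp add: S_def\<close>)
  have "Min (dotI ?d ` S) \<in> dotI ?d ` S" using finS Sne by simp
  then obtain bmin where bmin0: "bmin \<in> S" "dotI ?d bmin = Min (dotI ?d ` S)" by auto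
  have bmin: "bmin \<in> S" "\<forall>\<beta>\<in>S. dotI ?d bmin \<le> dotI ?d \<beta>"
    using bmin0 finS by auto
  have "Max (dotI ?d ` S) \<in> dotI ?d ` S" using finS Sne by simp
  then obtain bmax where bmax0: "bmax \<in> S" "dotI ?d bmax = Max (dotI ?d ` S)" by auto
  have bmax: "bmax \<in> S" "\<forall>\<beta>\<in>S. dotI ?d \<beta> \<le> dotI ?d bmax"
    using bmax0 finS by auto
  define X where "X = S - {bmin, bmax}"
  show ?thesis
  proof (intro exI conjI ballI allI impI)
    show "X \<subseteq> argm w0 ?K" using SK by (auto simp: X_def)
    have "S \<subseteq> X \<union> {bmin, bmax}" by (auto simp: X_def)
    then have "card S \<le> card (X \<union> {bmin, bmax})" by (rule card_mono[rotated]) (simp add: X_def finS)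
    also have "\<dots> \<le> card X + card {bmin, bmax}" by (rule card_Un_le)
    finally have "card S \<le> card X + card {bmin, bmax}" .
    moreover have "card {bmin, bmax} \<le> 2" by (simp add: card_insert_le_m1)
    ultimately show "r - 1 \<le> card X" using cS by linarith
  next
    fix \<beta> w assume bX: "\<beta> \<in> X" and w: "ipw w (dvec a b) \<noteq> 0"
    have bS: "\<beta> \<in> S" and nb: "\<beta> \<noteq> bmin" "\<beta> \<noteq> bmax" using bX by (auto simp: X_def)
    have "dotI ?d bmin \<noteq> dotI ?d \<beta>" using inj_on_eq_iff[OF inj bmin(1) bS] nb by simp
    then have lt1: "dotI ?d bmin < dotI ?d \<beta>" using bmin bS by force
    have "dotI ?d bmax \<noteq> dotI ?d \<beta>" using inj_on_eq_iff[OF inj bmax(1) bS] nb by simp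
    then have lt2: "dotI ?d \<beta> < dotI ?d bmax" using bmax bS by force
    have t1: "t \<beta> bmin < 0"
    proof -
      have "t \<beta> bmin * ?D < 0" using dI_diff[OF bS bmin(1)] lt1 by linarith
      then show ?thesis using Dpos by (simp add: mult_less_0_iff)
    qed
    have t2: "t \<beta> bmax > 0"
    proof -
      have "t \<beta> bmax * ?D > 0" using dI_diff[OF bS bmax(1)] lt2 by linarith
      then show ?thesis using Dpos by (simp add: zero_less_mult_iff)
    qed
    have e1: "dotw w bmin - dotw w \<beta> = t \<beta> bmin * ipw w (dvec a b)"
      unfolding dvec_dI by (rule dotw_par[OF parS[OF bS bmin(1)]])
    have e2: "dotw w bmax - dotw w \<beta> = t \<beta> bmax * ipw w (dvec a b)"
      unfolding dvec_dI by (rule dotw_par[OF parS[OF bS bmax(1)]])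
    have inK: "bmin \<in> ?K" "bmax \<in> ?K" using SK bmin bmax argm_subset by blast+
    show "\<beta> \<notin> argm w ?K"
    proof
      assume bA: "\<beta> \<in> argm w ?K"
      show False
      proof (cases "ipw w (dvec a b) > 0")
        case True
        then have "t \<beta> bmin * ipw w (dvec a b) < 0" using t1 by (simp add: mult_neg_pos)
        then have "dotw w bmin < dotw w \<beta>" using e1 by linarith
        then show False using bA inK by (auto simp: argm_def)
      next
        case False
        then have "ipw w (dvec a b) < 0" using w by simp
        then have "t \<beta> bmax * ipw w (dvec a b) < 0" using t2 by (simp add: mult_pos_neg)
        then have "dotw w bmax < dotw w \<beta>" using e2 by linarith
        then show False using bA inK by (auto simp: argm_def)
      qed
    qed
  qed
qed

definition cone :: "('n::finite \<Rightarrow> real) set \<Rightarrow> bool" where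
  "cone C \<longleftrightarrow> (\<forall>w\<in>C. \<forall>l. 0 < w l) \<and>
     (\<forall>w\<in>C. \<forall>w'\<in>C. \<forall>t::real. 0 \<le> t \<and> t \<le> 1 \<longrightarrow> (\<lambda>l. (1 - t) * w l + t * w' l) \<in> C) \<and>
     (\<forall>w\<in>C. \<forall>v. \<exists>e>0. (\<lambda>l. w l + e * v l) \<in> C)"

definition Cp :: "('n::finite \<Rightarrow> real) set \<Rightarrow> ('n \<Rightarrow> real) \<Rightarrow> ('n \<Rightarrow> real) set" where
  "Cp C x = {w\<in>C. ipw w x > 0}"

definition splits :: "('n::finite \<Rightarrow> real) set \<Rightarrow> ('n \<Rightarrow> real) \<Rightarrow> bool" where
  "splits C x \<longleftrightarrow> (\<exists>w\<in>C. ipw w x > 0) \<and> (\<exists>w\<in>C. ipw w x < 0)"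

lemma ipw_comb: "ipw (\<lambda>l. (1 - t) * w l + t * w' l) x = (1 - t) * ipw w x + t * ipw w' x"
  by (simp add: ipw_def distrib_right sum.distrib sum_distrib_left mult.assoc)

lemma ipw_lin: "ipw (\<lambda>l. w l + e * v l) x = ipw w x + e * ipw v x"
  by (simp add: ipw_def distrib_right sum.distrib sum_distrib_left mult.assoc)

lemma ipw_neg: "ipw w (\<lambda>l. - x l) = - ipw w x"
  by (simp add: ipw_def sum_negf)

lemma cone_open: "cone C \<Longrightarrow> w \<in> C \<Longrightarrow> \<exists>e>0. (\<lambda>l. w l + e * v l) \<in> C"
  unfolding cone_def by blast

lemma Cp_sub: "Cp C x \<subseteq> C" by (auto simp: Cp_def)

lemma cone_Cp:
  assumes C: "cone C" shows "cone (Cp C x)"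
  unfolding cone_def
proof (intro conjI ballI allI impI)
  fix w l assume "w \<in> Cp C x" then show "0 < w l" using C by (auto simp: cone_def Cp_def)
next
  fix w w' and t :: real assume w: "w \<in> Cp C x" and w': "w' \<in> Cp C x" and t: "0 \<le> t \<and> t \<le> 1"
  have "(\<lambda>l. (1 - t) * w l + t * w' l) \<in> C" using C w w' t by (auto simp: cone_def Cp_def)
  moreover have "(1 - t) * ipw w x + t * ipw w' x > 0"
  proof (cases "t = 0")
    case True then show ?thesis using w by (simp add: Cp_def)
  next
    case False
    then have "t * ipw w' x > 0" using t w' by (simp add: Cp_def)
    moreover have "(1 - t) * ipw w x \<ge> 0" using t w by (simp add: Cp_def)
    ultimately show ?thesis by linarith
  qed
  ultimately show "(\<lambda>l. (1 - t) * w l + t * w' l) \<in> Cp C x" by (simp add: Cp_def ipw_comb)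
next
  fix w v assume w: "w \<in> Cp C x"
  then have wC: "w \<in> C" and i: "ipw w x > 0" by (auto simp: Cp_def)
  have "\<exists>e>0. (\<lambda>l. w l + e * v l) \<in> C" using C wC unfolding cone_def by blast
  then obtain e0 where e0: "e0 > 0" "(\<lambda>l. w l + e0 * v l) \<in> C" by blast
  define j where "j = ipw v x"
  define e where "e = min e0 (ipw w x / (\<bar>j\<bar> + 1))"
  have epos: "e > 0" using e0 i by (simp add: e_def)
  have ele: "e \<le> e0" by (simp add: e_def)
  define t where "t = e / e0"
  have t: "0 \<le> t" "t \<le> 1" using epos ele e0 by (auto simp: t_def)
  have "(\<lambda>l. (1 - t) * w l + t * (w l + e0 * v l)) \<in> C" using C wC e0 t by (auto simp: cone_def)
  moreover have "(\<lambda>l. (1 - t) * w l + t * (w l + e0 * v l)) = (\<lambda>l. w l + e * v l)"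
    using e0 by (auto simp: t_def algebra_simps)
  ultimately have inC: "(\<lambda>l. w l + e * v l) \<in> C" by simp
  have "e * \<bar>j\<bar> < ipw w x"
  proof -
    have "e * \<bar>j\<bar> \<le> ipw w x / (\<bar>j\<bar> + 1) * \<bar>j\<bar>" by (rule mult_right_mono) (auto simp: e_def)
    also have "\<dots> < ipw w x" using i by (simp add: field_simps)
    finally show ?thesis .
  qed
  moreover have "- (e * \<bar>j\<bar>) \<le> e * j" using mult_left_mono[of "- \<bar>j\<bar>" j e] epos by simp
  ultimately have "ipw w x + e * ipw v x > 0" unfolding j_def[symmetric] by linarith
  then show "\<exists>e>0. (\<lambda>l. w l + e * v l) \<in> Cp C x" using inC epos by (auto simp: Cp_def ipw_lin)
qed

lemma hyper_point:
  assumes C: "cone C" and s: "splits C x"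
  shows "\<exists>w0\<in>C. ipw w0 x = 0"
proof -
  obtain w1 w2 where w1: "w1 \<in> C" "ipw w1 x > 0" and w2: "w2 \<in> C" "ipw w2 x < 0"
    using s by (auto simp: splits_def)
  define t where "t = ipw w1 x / (ipw w1 x - ipw w2 x)"
  have t: "0 \<le> t" "t \<le> 1" using w1 w2 by (auto simp: t_def field_simps)
  have "(\<lambda>l. (1 - t) * w1 l + t * w2 l) \<in> C" using C w1 w2 t by (auto simp: cone_def)
  moreover have "ipw (\<lambda>l. (1 - t) * w1 l + t * w2 l) x = 0"
    unfolding ipw_comb using w1 w2 by (simp add: t_def field_simps)
  ultimately show ?thesis by blast
qed

lemma geo:
  assumes C: "cone C" and s: "splits C x" and v: "ipw v x = 0" "ipw v y \<noteq> 0"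
  shows "splits (Cp C y) x \<or> splits (Cp C (\<lambda>l. - y l)) x"
proof -
  obtain w0 where w0: "w0 \<in> C" "ipw w0 x = 0" using hyper_point[OF C s] by blast
  have "\<exists>w1\<in>C. ipw w1 x = 0 \<and> ipw w1 y \<noteq> 0"
  proof (cases "ipw w0 y = 0")
    case False then show ?thesis using w0 by blast
  next
    case True
    have "\<exists>e>0. (\<lambda>l. w0 l + e * v l) \<in> C" using C w0(1) unfolding cone_def by blast
    then obtain e where e: "e > 0" "(\<lambda>l. w0 l + e * v l) \<in> C" by blast
    then show ?thesis using True w0 v by (intro bexI[of _ "(\<lambda>l. w0 l + e * v l)"]) (auto simp: ipw_lin)
  qed
  then obtain w1 where w1: "w1 \<in> C" "ipw w1 x = 0" "ipw w1 y \<noteq> 0" by blast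
  have "\<exists>l. x l \<noteq> 0"
  proof (rule ccontr)
    assume "\<not> ?thesis"
    then have "ipw w x = 0" for w by (simp add: ipw_def)
    then show False using s by (auto simp: splits_def)
  qed
  then obtain l where xl: "x l \<noteq> 0" by blast
  have xx: "ipw x x > 0" by (rule ipw_self_pos[of x l, OF xl])
  have sp: "splits (Cp C z) x" if z: "w1 \<in> Cp C z" for z
  proof -
    have Cz: "cone (Cp C z)" by (rule cone_Cp[OF C])
    have "\<exists>e>0. (\<lambda>l. w1 l + e * x l) \<in> Cp C z" using Cz z unfolding cone_def by blast
    then obtain e where e: "e > 0" "(\<lambda>l. w1 l + e * x l) \<in> Cp C z" by blast
    have "\<exists>e>0. (\<lambda>l. w1 l + e * (- x l)) \<in> Cp C z" using cone_open[OF Cz z, of "\<lambda>l. - x l"] by simp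
    then obtain e' where e': "e' > 0" "(\<lambda>l. w1 l + e' * (- x l)) \<in> Cp C z" by blast
    have "ipw (\<lambda>l. w1 l + e * x l) x > 0" using e xx w1 by (simp add: ipw_lin)
    moreover have "ipw (\<lambda>l. w1 l + e' * (- x l)) x < 0"
    proof -
      have "ipw (\<lambda>l. w1 l + e' * (- x l)) x = ipw w1 x + e' * ipw (\<lambda>l. - x l) x"
        by (rule ipw_lin)
      moreover have "ipw (\<lambda>l. - x l) x = - ipw x x" by (simp add: ipw_def sum_negf)
      ultimately show ?thesis using e' xx w1 by simp
    qed
    ultimately show ?thesis using e e' by (auto simp: splits_def)
  qed
  show ?thesis
  proof (cases "ipw w1 y > 0")
    case True then show ?thesis using sp[of y] w1 by (auto simp: Cp_def)
  next
    case False then have "ipw w1 (\<lambda>l. - y l) > 0" using w1 by (simp add: ipw_neg)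
    then show ?thesis using sp[of "\<lambda>l. - y l"] w1 by (auto simp: Cp_def)
  qed
qed

lemma lemmaK:
  fixes q :: "'n::finite intpoly"
  assumes C: "cone C" and s: "splits C (dvec a b)" and ab: "a \<noteq> b" and q: "q \<noteq> 0" and r: "r \<ge> 1"
  shows "card (UC (Cp C (dvec a b)) (Poly_Mapping.keys q)) + card (UC (Cp C (\<lambda>l. - dvec a b l)) (Poly_Mapping.keys q)) + (r - 1)
     \<le> card (UC C (Poly_Mapping.keys (Fb a b ^ r * q)))"
proof -
  let ?K = "Poly_Mapping.keys (Fb a b ^ r * q)" and ?x = "dvec a b"
  let ?Cp = "Cp C ?x" and ?Cm = "Cp C (\<lambda>l. - dvec a b l)"
  let ?B = "\<Sum>i<r. b" and ?A = "\<Sum>i<r. a"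
  have P: "UC ?Cp ?K = (+) ?B ` UC ?Cp (Poly_Mapping.keys q)"
  proof -
    have "argm w ?K = (+) ?B ` argm w (Poly_Mapping.keys q)" if "w \<in> ?Cp" for w
      using that by (intro argm_Fb_pow[OF q]) (simp add: Cp_def ipw_dvec)
    then show ?thesis by (auto simp: UC_def)
  qed
  have M: "UC ?Cm ?K = (+) ?A ` UC ?Cm (Poly_Mapping.keys q)"
  proof -
    have "argm w ?K = (+) ?A ` argm w (Poly_Mapping.keys q)" if "w \<in> ?Cm" for w
      using that by (intro argm_Fb_pow'[OF q]) (simp add: Cp_def ipw_neg ipw_dvec)
    then show ?thesis by (auto simp: UC_def)
  qed
  have cP: "card (UC ?Cp ?K) = card (UC ?Cp (Poly_Mapping.keys q))"
    unfolding P by (rule card_image) (simp add: inj_on_def)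
  have cM: "card (UC ?Cm ?K) = card (UC ?Cm (Poly_Mapping.keys q))"
    unfolding M by (rule card_image) (simp add: inj_on_def)
  have disj: "UC ?Cp ?K \<inter> UC ?Cm ?K = {}"
  proof (rule ccontr)
    assume "\<not> ?thesis"
    then obtain \<beta> w w' where w: "w \<in> ?Cp" "\<beta> \<in> argm w ?K" and w': "w' \<in> ?Cm" "\<beta> \<in> argm w' ?K"
      by (auto simp: UC_def)
    have "dotw w a > dotw w b" using w by (simp add: Cp_def ipw_dvec)
    moreover have "dotw w' a < dotw w' b" using w' by (simp add: Cp_def ipw_neg ipw_dvec)
    ultimately show False using argm_disj[OF q r] w w' by blast
  qed
  obtain w0 where w0: "w0 \<in> C" "ipw w0 ?x = 0" using hyper_point[OF C s] by blast
  have hom: "dotw w0 a = dotw w0 b" using w0 by (simp add: ipw_dvec)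
  obtain X where X: "X \<subseteq> argm w0 ?K" "r - 1 \<le> card X"
    "\<forall>\<beta>\<in>X. \<forall>w. ipw w ?x \<noteq> 0 \<longrightarrow> \<beta> \<notin> argm w ?K"
    using interior[OF ab q hom, of r] by blast
  have XP: "X \<inter> UC ?Cp ?K = {}"
  proof (rule ccontr)
    assume "\<not> ?thesis"
    then obtain \<beta> w where "\<beta> \<in> X" "w \<in> ?Cp" "\<beta> \<in> argm w ?K" by (auto simp: UC_def)
    moreover have "ipw w ?x \<noteq> 0" using \<open>w \<in> ?Cp\<close> by (simp add: Cp_def)
    ultimately show False using X(3) by blast
  qed
  have XM: "X \<inter> UC ?Cm ?K = {}"
  proof (rule ccontr)
    assume "\<not> ?thesis"
    then obtain \<beta> w where "\<beta> \<in> X" "w \<in> ?Cm" "\<beta> \<in> argm w ?K" by (auto simp: UC_def)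
    moreover have "ipw w ?x \<noteq> 0" using \<open>w \<in> ?Cm\<close> by (simp add: Cp_def ipw_neg)
    ultimately show False using X(3) by blast
  qed
  have sub: "UC ?Cp ?K \<union> UC ?Cm ?K \<union> X \<subseteq> UC C ?K"
    using X(1) w0(1) Cp_sub[of C] by (auto simp: UC_def)
  have fin: "finite (UC C ?K)" by (rule finite_subset[OF UC_subset]) simp
  have finP: "finite (UC ?Cp ?K)" "finite (UC ?Cm ?K)" "finite X"
    by (rule finite_subset[OF _ fin], use sub in blast)+
  have "card (UC ?Cp ?K \<union> UC ?Cm ?K) = card (UC ?Cp ?K) + card (UC ?Cm ?K)"
    by (rule card_Un_disjoint[OF finP(1,2) disj])
  moreover have "(UC ?Cp ?K \<union> UC ?Cm ?K) \<inter> X = {}" using XP XM by blast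
  then have "card (UC ?Cp ?K \<union> UC ?Cm ?K \<union> X) = card (UC ?Cp ?K \<union> UC ?Cm ?K) + card X"
    using finP by (intro card_Un_disjoint) auto
  ultimately have "card (UC ?Cp ?K \<union> UC ?Cm ?K \<union> X) = card (UC ?Cp ?K) + card (UC ?Cm ?K) + card X"
    by simp
  moreover have "card (UC ?Cp ?K \<union> UC ?Cm ?K \<union> X) \<le> card (UC C ?K)"
    by (rule card_mono[OF fin sub])
  ultimately show ?thesis using cP cM X(2) by linarith
qed

lemma prod_pm:
  fixes f :: "nat \<Rightarrow> 'a::comm_ring_1"
  assumes "finite R" "\<forall>i\<in>R. f i = X \<or> f i = - X"
  shows "prod f R = X ^ card R \<or> prod f R = - (X ^ card R)"
  using assms
proof (induction R rule: finite_induct)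
  case empty then show ?case by simp
next
  case (insert x R)
  then have IH: "prod f R = X ^ card R \<or> prod f R = - (X ^ card R)" by blast
  have fx: "f x = X \<or> f x = - X" using insert.prems by blast
  show ?case using IH fx insert.hyps by (auto simp: algebra_simps)
qed

lemma prod_nonzero:
  fixes A B :: "nat \<Rightarrow> ('n::finite \<Rightarrow>\<^sub>0 nat)"
  assumes "finite I" "\<forall>i\<in>I. A i \<noteq> B i" "g \<noteq> 0"
  shows "(\<Prod>i\<in>I. Fb (A i) (B i)) * g \<noteq> 0"
  using assms
proof (induction I rule: finite_induct)
  case empty then show ?case by simp
next
  case (insert x I)
  then have "(\<Prod>i\<in>I. Fb (A i) (B i)) * g \<noteq> 0" by blast
  then have "Fb (A x) (B x) * ((\<Prod>i\<in>I. Fb (A i) (B i)) * g) \<noteq> 0"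
    using insert.prems by (intro Fb_mult_nonzero) auto
  then show ?case using insert.hyps by (simp add: mult.assoc)
qed

lemma UC_nonempty_card:
  fixes p :: "'n::finite intpoly"
  assumes "p \<noteq> 0" "C \<noteq> {}"
  shows "1 \<le> card (UC C (Poly_Mapping.keys p))"
proof -
  obtain w where w: "w \<in> C" using assms by blast
  obtain \<beta> where b: "\<beta> \<in> argm w (Poly_Mapping.keys p)"
    using argm_nonempty[of "Poly_Mapping.keys p" w] assms by auto
  have "\<beta> \<in> UC C (Poly_Mapping.keys p)" using w b by (auto simp: UC_def)
  moreover have "finite (UC C (Poly_Mapping.keys p))" by (rule finite_subset[OF UC_subset]) simp
  ultimately show ?thesis by (metis One_nat_def Suc_leI card_gt_0_iff empty_iff)
qed

lemma mainG:
  fixes A B :: "nat \<Rightarrow> ('n::finite \<Rightarrow>\<^sub>0 nat)"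
  assumes fin: "finite I"
    and ne: "\<forall>i\<in>I. A i \<noteq> B i"
    and pw: "\<forall>i\<in>I. \<forall>j\<in>I. (A i = A j \<and> B i = B j) \<or> (A i = B j \<and> B i = A j) \<or>
              (\<exists>v. ipw v (dvec (A i) (B i)) = 0 \<and> ipw v (dvec (A j) (B j)) \<noteq> 0)"
  shows "\<forall>C g. cone C \<longrightarrow> C \<noteq> {} \<longrightarrow> g \<noteq> 0 \<longrightarrow>
     1 + card {i\<in>I. splits C (dvec (A i) (B i))} \<le> card (UC C (Poly_Mapping.keys ((\<Prod>i\<in>I. Fb (A i) (B i)) * g)))"
  using fin ne pw
proof (induction I rule: finite_psubset_induct)
  case (psubset I)
  show ?case
  proof (intro allI impI)
    fix C :: "('n \<Rightarrow> real) set" and g :: "'n intpoly"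
    assume C: "cone C" and Cne: "C \<noteq> {}" and g: "g \<noteq> 0"
    let ?d = "\<lambda>i. dvec (A i) (B i)"
    let ?p = "(\<Prod>i\<in>I. Fb (A i) (B i)) * g"
    have p0: "?p \<noteq> 0" using prod_nonzero[OF psubset.hyps(1)] psubset.prems g by blast
    show "1 + card {i\<in>I. splits C (?d i)} \<le> card (UC C (Poly_Mapping.keys ?p))"
    proof (cases "\<exists>k\<in>I. splits C (?d k)")
      case False
      then have e: "{i\<in>I. splits C (?d i)} = {}" by blast
      show ?thesis unfolding e using UC_nonempty_card[OF p0 Cne] by simp
    next
      case True
      then obtain k where k: "k \<in> I" "splits C (?d k)" by blast
      define R where "R = {i\<in>I. (A i = A k \<and> B i = B k) \<or> (A i = B k \<and> B i = A k)}"
      define I' where "I' = I - R"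
      define X where "X = Fb (A k) (B k)"
      define q where "q = (\<Prod>i\<in>I'. Fb (A i) (B i)) * g"
      define r where "r = card R"
      have kR: "k \<in> R" using k by (simp add: R_def)
      have RI: "R \<subseteq> I" by (auto simp: R_def)
      have finR: "finite R" using RI psubset.hyps(1) finite_subset by blast
      have r1: "r \<ge> 1" using kR finR by (auto simp: r_def Suc_le_eq card_gt_0_iff)
      have I'sub: "I' \<subset> I" using kR k(1) by (auto simp: I'_def)
      have finI': "finite I'" using psubset.hyps(1) by (simp add: I'_def)
      have neI': "\<forall>i\<in>I'. A i \<noteq> B i" using psubset.prems(1) by (auto simp: I'_def)
      have pwI': "\<forall>i\<in>I'. \<forall>j\<in>I'. (A i = A j \<and> B i = B j) \<or> (A i = B j \<and> B i = A j) \<or>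
              (\<exists>v. ipw v (dvec (A i) (B i)) = 0 \<and> ipw v (dvec (A j) (B j)) \<noteq> 0)"
        using psubset.prems(2) by (auto simp: I'_def)
      have q0: "q \<noteq> 0" unfolding q_def using prod_nonzero[OF finI' neI' g] .
      have abk: "A k \<noteq> B k" using psubset.prems(1) k(1) by blast
      have split: "(\<Prod>i\<in>I. Fb (A i) (B i)) = (\<Prod>i\<in>I'. Fb (A i) (B i)) * (\<Prod>i\<in>R. Fb (A i) (B i))"
        unfolding I'_def by (rule prod.subset_diff[OF RI psubset.hyps(1)])
      have "\<forall>i\<in>R. Fb (A i) (B i) = X \<or> Fb (A i) (B i) = - X"
      proof
        fix i assume "i \<in> R"
        then have "(A i = A k \<and> B i = B k) \<or> (A i = B k \<and> B i = A k)" by (simp add: R_def)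
        then show "Fb (A i) (B i) = X \<or> Fb (A i) (B i) = - X"
          by (auto simp: X_def Fb_def)
      qed
      from prod_pm[OF finR this] have PR: "(\<Prod>i\<in>R. Fb (A i) (B i)) = X ^ r \<or> (\<Prod>i\<in>R. Fb (A i) (B i)) = - (X ^ r)"
        by (simp add: r_def)
      have keq: "Poly_Mapping.keys ?p = Poly_Mapping.keys (X ^ r * q)"
      proof -
        have pe: "?p = (\<Prod>i\<in>R. Fb (A i) (B i)) * q" unfolding split q_def by (simp add: ac_simps)
        from PR show ?thesis
        proof
          assume "(\<Prod>i\<in>R. Fb (A i) (B i)) = X ^ r" then show ?thesis by (simp only: pe)
        next
          assume "(\<Prod>i\<in>R. Fb (A i) (B i)) = - (X ^ r)"
          then have "?p = - (X ^ r * q)" by (simp only: pe mult_minus_left)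
          then show ?thesis by (simp only: keys_minus)
        qed
      qed
      have K: "card (UC (Cp C (?d k)) (Poly_Mapping.keys q)) + card (UC (Cp C (\<lambda>l. - ?d k l)) (Poly_Mapping.keys q)) + (r - 1)
          \<le> card (UC C (Poly_Mapping.keys ?p))"
        unfolding keq X_def by (rule lemmaK[OF C k(2) abk q0 r1])
      have spP: "splits C (?d k)" using k by blast
      have neP: "Cp C (?d k) \<noteq> {}" using spP by (auto simp: splits_def Cp_def)
      have neM: "Cp C (\<lambda>l. - ?d k l) \<noteq> {}" using spP by (auto simp: splits_def Cp_def ipw_neg)
      have IHP: "1 + card {i\<in>I'. splits (Cp C (?d k)) (?d i)} \<le> card (UC (Cp C (?d k)) (Poly_Mapping.keys q))"
        using psubset.IH[OF I'sub neI' pwI', rule_format, OF cone_Cp[OF C] neP g] unfolding q_def .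
      have IHM: "1 + card {i\<in>I'. splits (Cp C (\<lambda>l. - ?d k l)) (?d i)} \<le> card (UC (Cp C (\<lambda>l. - ?d k l)) (Poly_Mapping.keys q))"
        using psubset.IH[OF I'sub neI' pwI', rule_format, OF cone_Cp[OF C] neM g] unfolding q_def .
      have cover: "{i\<in>I. splits C (?d i)} \<subseteq> R \<union> {i\<in>I'. splits (Cp C (?d k)) (?d i)} \<union> {i\<in>I'. splits (Cp C (\<lambda>l. - ?d k l)) (?d i)}"
      proof
        fix i assume i: "i \<in> {i\<in>I. splits C (?d i)}"
        show "i \<in> R \<union> {i\<in>I'. splits (Cp C (?d k)) (?d i)} \<union> {i\<in>I'. splits (Cp C (\<lambda>l. - ?d k l)) (?d i)}"
        proof (cases "i \<in> R")
          case True then show ?thesis by blast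
        next
          case False
          then have iI': "i \<in> I'" using i by (simp add: I'_def)
          have "\<not> ((A i = A k \<and> B i = B k) \<or> (A i = B k \<and> B i = A k))" using False i by (simp add: R_def)
          then obtain v where v: "ipw v (?d i) = 0" "ipw v (?d k) \<noteq> 0"
            using psubset.prems(2) i k(1) by blast
          have "splits (Cp C (?d k)) (?d i) \<or> splits (Cp C (\<lambda>l. - ?d k l)) (?d i)"
            by (rule geo[OF C _ v]) (use i in simp)
          then show ?thesis using iI' by blast
        qed
      qed
      have "card {i\<in>I. splits C (?d i)} \<le> card (R \<union> {i\<in>I'. splits (Cp C (?d k)) (?d i)} \<union> {i\<in>I'. splits (Cp C (\<lambda>l. - ?d k l)) (?d i)})"
        by (rule card_mono[OF _ cover]) (simp add: finR finI')
      also have "\<dots> \<le> card R + card {i\<in>I'. splits (Cp C (?d k)) (?d i)} + card {i\<in>I'. splits (Cp C (\<lambda>l. - ?d k l)) (?d i)}"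
        using card_Un_le[of "R \<union> {i\<in>I'. splits (Cp C (?d k)) (?d i)}" "{i\<in>I'. splits (Cp C (\<lambda>l. - ?d k l)) (?d i)}"]
          card_Un_le[of R "{i\<in>I'. splits (Cp C (?d k)) (?d i)}"] by linarith
      finally show ?thesis using K IHP IHM r1 unfolding r_def by linarith
    qed
  qed
qed

lemma pm_add_eq_0: "(x :: 'n \<Rightarrow>\<^sub>0 nat) + y = 0 \<Longrightarrow> x = 0"
proof (rule poly_mapping_eqI)
  fix l assume "x + y = 0"
  then have "Poly_Mapping.lookup (x + y) l = 0" by simp
  then show "Poly_Mapping.lookup x l = Poly_Mapping.lookup 0 l" by (simp add: lookup_add)
qed

lemma not_unit_keys:
  fixes S :: "'n::finite intpoly"
  assumes "\<forall>k\<in>Poly_Mapping.keys S. k \<noteq> 0"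
  shows "\<not> S dvd 1"
proof
  assume "S dvd 1"
  then obtain v where v: "1 = S * v" by (elim dvdE)
  have "0 \<in> Poly_Mapping.keys (S * v)" unfolding v[symmetric] by simp
  then obtain x y where "0 = x + y" "x \<in> Poly_Mapping.keys S"
    using keys_mult[of S v] by blast
  then show False using assms pm_add_eq_0 by metis
qed

lemma not_unit_Fb:
  fixes a b :: "'n::finite \<Rightarrow>\<^sub>0 nat"
  assumes ab: "a \<noteq> b"
  shows "\<not> Fb a b dvd 1"
proof
  assume "Fb a b dvd 1"
  then obtain v where v: "1 = Fb a b * v" by (elim dvdE)
  have "v \<noteq> 0" using v by auto
  from card_keys_ge2[OF this _ ab, of 1] have "2 \<le> card (Poly_Mapping.keys (Fb a b * v))" by simp
  then show False unfolding v[symmetric] by simp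
qed

lemma irr_ne:
  assumes "irreducible (Fb a b)" shows "a \<noteq> b"
  using assms by (auto simp: Fb_def)

lemma irr_disjoint:
  fixes a b :: "'n::finite \<Rightarrow>\<^sub>0 nat"
  assumes irr: "irreducible (Fb a b)"
  shows "Poly_Mapping.lookup a l = 0 \<or> Poly_Mapping.lookup b l = 0"
proof (rule ccontr)
  assume "\<not> ?thesis"
  then have al: "Poly_Mapping.lookup a l \<ge> 1" and bl: "Poly_Mapping.lookup b l \<ge> 1" by auto
  define e where "e = (Poly_Mapping.single l 1 :: 'n \<Rightarrow>\<^sub>0 nat)"
  have ae: "a = e + (a - e)"
    by (rule poly_mapping_eqI) (use al in \<open>auto simp: e_def lookup_add lookup_minus lookup_single when_def\<close>)
  have be: "b = e + (b - e)"
    by (rule poly_mapping_eqI) (use bl in \<open>auto simp: e_def lookup_add lookup_minus lookup_single when_def\<close>)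
  have fac: "Fb a b = Poly_Mapping.single e 1 * Fb (a - e) (b - e)"
    by (subst ae, subst be) (simp add: Fb_def right_diff_distrib mult_single)
  have e0: "e \<noteq> 0"
  proof
    assume "e = 0"
    then have "Poly_Mapping.lookup e l = 0" by simp
    then show False by (simp add: e_def)
  qed
  from irreducibleD[OF irr fac] have "Poly_Mapping.single e (1::int) dvd 1 \<or> Fb (a - e) (b - e) dvd 1" .
  moreover have "\<not> Poly_Mapping.single e (1::int) dvd 1"
    by (rule not_unit_keys) (use e0 in simp)
  moreover have "a - e \<noteq> b - e" using irr_ne[OF irr] ae be by metis
  then have "\<not> Fb (a - e) (b - e) dvd 1" by (rule not_unit_Fb)
  ultimately show False by blast
qed

lemma single_pow: "(Poly_Mapping.single c (1::int)) ^ n = Poly_Mapping.single (\<Sum>i<n. c) 1"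
  by (induction n) (simp_all add: mult_single add.commute)

lemma sum_const_pm_zero: "(\<Sum>i<(n::nat). (c :: 'n \<Rightarrow>\<^sub>0 nat)) = 0 \<Longrightarrow> n = 0 \<or> c = 0"
proof -
  assume h: "(\<Sum>i<n. c) = 0"
  show "n = 0 \<or> c = 0"
  proof (rule ccontr)
    assume "\<not> ?thesis"
    then have "n \<noteq> 0" "c \<noteq> 0" by auto
    moreover have "\<exists>l. Poly_Mapping.lookup c l \<noteq> 0" using \<open>c \<noteq> 0\<close> by (metis lookup_zero poly_mapping_eqI)
    then obtain l where "Poly_Mapping.lookup c l \<noteq> 0" by blast
    moreover have "Poly_Mapping.lookup (\<Sum>i<n. c) l = n * Poly_Mapping.lookup c l" by (simp add: lookup_sum)
    ultimately show False using h by simp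
  qed
qed

lemma irr_primitive:
  fixes a b :: "'n::finite \<Rightarrow>\<^sub>0 nat"
  assumes irr: "irreducible (Fb a b)" and a0: "a \<noteq> 0" and b0: "b \<noteq> 0"
    and g: "g \<ge> 2" and dv: "\<forall>l. g dvd Poly_Mapping.lookup a l \<and> g dvd Poly_Mapping.lookup b l"
  shows False
proof -
  define a' where "a' = Poly_Mapping.map (\<lambda>x. x div g) a"
  define b' where "b' = Poly_Mapping.map (\<lambda>x. x div g) b"
  have la: "Poly_Mapping.lookup a' l = Poly_Mapping.lookup a l div g" for l
    by (simp add: a'_def map.rep_eq when_def)
  have lb: "Poly_Mapping.lookup b' l = Poly_Mapping.lookup b l div g" for l
    by (simp add: b'_def map.rep_eq when_def)
  have aa: "a = (\<Sum>i<g. a')"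
    by (rule poly_mapping_eqI) (use dv in \<open>simp add: lookup_sum la\<close>)
  have bb: "b = (\<Sum>i<g. b')"
    by (rule poly_mapping_eqI) (use dv in \<open>simp add: lookup_sum lb\<close>)
  have a'0: "a' \<noteq> 0" using a0 aa by auto
  have b'0: "b' \<noteq> 0" using b0 bb by auto
  have a'b': "a' \<noteq> b'" using irr_ne[OF irr] aa bb by auto
  define x where "x = (Poly_Mapping.single a' 1 :: 'n intpoly)"
  define y where "y = (Poly_Mapping.single b' 1 :: 'n intpoly)"
  define S where "S = (\<Sum>i<g. y ^ (g - Suc i) * x ^ i)"
  have "Fb a b = x ^ g - y ^ g"
    by (simp add: Fb_def x_def y_def single_pow aa[symmetric] bb[symmetric])
  also have "\<dots> = Fb a' b' * S" unfolding S_def power_diff_sumr2 by (simp add: Fb_def x_def y_def)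
  finally have fact: "Fb a b = Fb a' b' * S" .
  have nS: "\<not> S dvd 1"
  proof (rule not_unit_keys, rule ballI)
    fix k assume k: "k \<in> Poly_Mapping.keys S"
    then obtain i where i: "i < g" "k \<in> Poly_Mapping.keys (y ^ (g - Suc i) * x ^ i)"
      using keys_sum[of "\<lambda>i. y ^ (g - Suc i) * x ^ i" "{..<g}"] unfolding S_def by blast
    have "y ^ (g - Suc i) * x ^ i = Poly_Mapping.single ((\<Sum>j<g - Suc i. b') + (\<Sum>j<i. a')) 1"
      by (simp add: x_def y_def single_pow mult_single)
    then have kk: "k = (\<Sum>j<g - Suc i. b') + (\<Sum>j<i. a')" using i(2) by simp
    show "k \<noteq> 0"
    proof
      assume "k = 0"
      then have z1: "(\<Sum>j<g - Suc i. b') = 0" and z2: "(\<Sum>j<i. a') = 0"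
        using kk pm_add_eq_0 by (metis add.commute)+
      show False
      proof (cases "i = 0")
        case True then show False using z1 g b'0 sum_const_pm_zero by fastforce
      next
        case False then show False using z2 a'0 sum_const_pm_zero by blast
      qed
    qed
  qed
  from irreducibleD[OF irr fact] nS not_unit_Fb[OF a'b'] show False by blast
qed

lemma int_primitive:
  fixes a b :: "'n::finite \<Rightarrow>\<^sub>0 nat"
  assumes irr: "irreducible (Fb a b)" and a0: "a \<noteq> 0" and b0: "b \<noteq> 0"
    and H: "\<forall>l. g dvd dI a b l"
  shows "g = 1 \<or> g = - 1"
proof -
  have dv: "g dvd int (Poly_Mapping.lookup a l) \<and> g dvd int (Poly_Mapping.lookup b l)" for l
  proof (cases "Poly_Mapping.lookup a l = 0")
    case True
    then have "g dvd - int (Poly_Mapping.lookup b l)" using H[rule_format, of l] by (simp add: dI_def)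
    then show ?thesis using True by simp
  next
    case False
    then have "Poly_Mapping.lookup b l = 0" using irr_disjoint[OF irr, of l] by simp
    then show ?thesis using H[rule_format, of l] by (simp add: dI_def)
  qed
  have g0: "g \<noteq> 0"
  proof
    assume "g = 0"
    then have "Poly_Mapping.lookup a l = 0" for l using dv[of l] by simp
    then have "a = 0" by (intro poly_mapping_eqI) simp
    then show False using a0 by simp
  qed
  define n where "n = nat \<bar>g\<bar>"
  have ndv: "n dvd Poly_Mapping.lookup a l \<and> n dvd Poly_Mapping.lookup b l" for l
  proof -
    have "\<bar>g\<bar> dvd int (Poly_Mapping.lookup a l)" "\<bar>g\<bar> dvd int (Poly_Mapping.lookup b l)"
      using dv[of l] by simp_all
    then show ?thesis unfolding n_def by (metis int_dvd_int_iff nat_0_le abs_ge_zero)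
  qed
  have "\<not> n \<ge> 2" using irr_primitive[OF irr a0 b0, of n] ndv by blast
  moreover have "n \<ge> 1" using g0 by (simp add: n_def)
  ultimately have "n = 1" by simp
  then have "\<bar>g\<bar> = 1" unfolding n_def by simp
  then show ?thesis by (cases "g \<ge> 0") auto
qed

lemma int_parallel:
  fixes di dk :: "'n \<Rightarrow> int"
  assumes l0: "di l0 \<noteq> 0" and pr: "\<forall>l m. di m * dk l = di l * dk m"
    and pi: "\<forall>g. (\<forall>l. g dvd di l) \<longrightarrow> g = 1 \<or> g = - 1"
    and pk: "\<forall>g. (\<forall>l. g dvd dk l) \<longrightarrow> g = 1 \<or> g = - 1"
  shows "dk = di \<or> dk = (\<lambda>l. - di l)"
proof -
  define \<alpha> where "\<alpha> = di l0"
  define \<beta> where "\<beta> = dk l0"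
  have eq: "\<alpha> * dk l = \<beta> * di l" for l using pr[rule_format, of l l0] by (simp add: \<alpha>_def \<beta>_def mult.commute)
  define G where "G = gcd \<alpha> \<beta>"
  have G0: "G \<noteq> 0" using l0 by (simp add: G_def \<alpha>_def)
  define \<alpha>' where "\<alpha>' = \<alpha> div G"
  define \<beta>' where "\<beta>' = \<beta> div G"
  have a: "\<alpha> = G * \<alpha>'" by (simp add: \<alpha>'_def G_def)
  have b: "\<beta> = G * \<beta>'" by (simp add: \<beta>'_def G_def)
  have cop: "coprime \<alpha>' \<beta>'" unfolding \<alpha>'_def \<beta>'_def G_def by (rule div_gcd_coprime) (use l0 in \<open>simp add: \<alpha>_def\<close>)
  have eq': "\<alpha>' * dk l = \<beta>' * di l" for l
    using eq[of l] G0 unfolding a b by (simp add: mult.assoc)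
  have "\<alpha>' dvd di l" for l
  proof -
    have "\<alpha>' dvd \<beta>' * di l" using eq'[of l] by (metis dvd_triv_left)
    then show ?thesis using cop by (simp add: coprime_dvd_mult_right_iff)
  qed
  then have ua: "\<alpha>' = 1 \<or> \<alpha>' = - 1" using pi by blast
  have "\<beta>' dvd dk l" for l
  proof -
    have "\<beta>' dvd \<alpha>' * dk l" using eq'[of l] by (metis dvd_triv_left)
    moreover have "coprime \<beta>' \<alpha>'" using cop by (simp add: coprime_commute)
    ultimately show ?thesis by (simp add: coprime_dvd_mult_right_iff)
  qed
  then have ub: "\<beta>' = 1 \<or> \<beta>' = - 1" using pk by blast
  show ?thesis using ua ub eq' by (auto simp: fun_eq_iff) (metis minus_mult_minus mult_1 mult_minus1)+
qed

lemma recover_a: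
  assumes "\<forall>l. Poly_Mapping.lookup a l = 0 \<or> Poly_Mapping.lookup b l = 0"
  shows "Poly_Mapping.lookup a l = nat (dI a b l)" "Poly_Mapping.lookup b l = nat (- dI a b l)"
  using assms[rule_format, of l] by (auto simp: dI_def)

lemma pairwise:
  fixes a b a' b' :: "'n::finite \<Rightarrow>\<^sub>0 nat"
  assumes irr: "irreducible (Fb a b)" and irr': "irreducible (Fb a' b')"
    and nz: "a \<noteq> 0" "b \<noteq> 0" "a' \<noteq> 0" "b' \<noteq> 0"
  shows "(a = a' \<and> b = b') \<or> (a = b' \<and> b = a') \<or>
     (\<exists>v. ipw v (dvec a b) = 0 \<and> ipw v (dvec a' b') \<noteq> 0)"
proof (cases "\<exists>l m. dI a b m * dI a' b' l \<noteq> dI a b l * dI a' b' m")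
  case True
  then obtain l m where lm: "dI a b m * dI a' b' l \<noteq> dI a b l * dI a' b' m" by blast
  let ?v = "vv (dI a b) l m"
  have "ipw ?v (dvec a b) = 0" using vv_hom[of a b l m] by (simp add: ipw_dvec)
  moreover have h1: "ipw ?v (dvec a' b') = real_of_int (dI a b m * dI a' b' l - dI a b l * dI a' b' m)"
    by (simp add: ipw_dvec dotw_vv dI_def algebra_simps)
  have h0: "dI a b m * dI a' b' l - dI a b l * dI a' b' m \<noteq> 0" using lm by simp
  have h2: "real_of_int (dI a b m * dI a' b' l - dI a b l * dI a' b' m) \<noteq> 0"
    using h0 by (simp only: of_int_eq_0_iff not_False_eq_True)
  have "ipw ?v (dvec a' b') \<noteq> 0" unfolding h1 by (rule h2)
  ultimately show ?thesis by blast
next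
  case False
  then have pr: "\<forall>l m. dI a b m * dI a' b' l = dI a b l * dI a' b' m" by blast
  obtain l0 where "Poly_Mapping.lookup a l0 \<noteq> Poly_Mapping.lookup b l0"
    using irr_ne[OF irr] by (meson poly_mapping_eqI)
  then have l0: "dI a b l0 \<noteq> 0" by (simp add: dI_def)
  have pi: "\<forall>g. (\<forall>l. g dvd dI a b l) \<longrightarrow> g = 1 \<or> g = - 1"
    using int_primitive[OF irr nz(1,2)] by blast
  have pk: "\<forall>g. (\<forall>l. g dvd dI a' b' l) \<longrightarrow> g = 1 \<or> g = - 1"
    using int_primitive[OF irr' nz(3,4)] by blast
  have D: "\<forall>l. Poly_Mapping.lookup a l = 0 \<or> Poly_Mapping.lookup b l = 0" using irr_disjoint[OF irr] by blast
  have D': "\<forall>l. Poly_Mapping.lookup a' l = 0 \<or> Poly_Mapping.lookup b' l = 0" using irr_disjoint[OF irr'] by blast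
  from int_parallel[OF l0 pr pi pk] show ?thesis
  proof
    assume e: "dI a' b' = dI a b"
    have "a = a'" by (rule poly_mapping_eqI) (simp add: recover_a[OF D] recover_a[OF D'] e)
    moreover have "b = b'" by (rule poly_mapping_eqI) (simp add: recover_a[OF D] recover_a[OF D'] e)
    ultimately show ?thesis by blast
  next
    assume e: "dI a' b' = (\<lambda>l. - dI a b l)"
    have "a = b'" by (rule poly_mapping_eqI) (simp add: recover_a[OF D] recover_a[OF D'] e)
    moreover have "b = a'" by (rule poly_mapping_eqI) (simp add: recover_a[OF D] recover_a[OF D'] e)
    ultimately show ?thesis by blast
  qed
qed

definition C0 :: "('n::finite \<Rightarrow> real) set" where
  "C0 = {w. \<forall>l. 0 < w l}"

lemma cone_C0: "cone (C0 :: ('n::finite \<Rightarrow> real) set)"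
  unfolding cone_def
proof (intro conjI ballI allI impI)
  fix w l assume "w \<in> (C0 :: ('n \<Rightarrow> real) set)" then show "0 < w l" by (simp add: C0_def)
next
  fix w w' :: "'n \<Rightarrow> real" and t :: real
  assume w: "w \<in> C0" and w': "w' \<in> C0" and t: "0 \<le> t \<and> t \<le> 1"
  have "0 < (1 - t) * w l + t * w' l" for l
  proof (cases "t = 0")
    case True then show ?thesis using w by (simp add: C0_def)
  next
    case False
    then have "t * w' l > 0" using t w' by (simp add: C0_def)
    moreover have "(1 - t) * w l \<ge> 0" using t w by (simp add: C0_def less_imp_le)
    ultimately show ?thesis by linarith
  qed
  then show "(\<lambda>l. (1 - t) * w l + t * w' l) \<in> C0" by (simp add: C0_def)
next
  fix w v :: "'n \<Rightarrow> real" assume w: "w \<in> C0"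
  define e where "e = Min (range (\<lambda>l. w l / (\<bar>v l\<bar> + 1)))"
  have fin: "finite (range (\<lambda>l. w l / (\<bar>v l\<bar> + 1)))" by simp
  have epos: "e > 0" unfolding e_def
    using w by (subst Min_gr_iff[OF fin]) (auto simp: C0_def)
  have ele: "e \<le> w l / (\<bar>v l\<bar> + 1)" for l unfolding e_def by (rule Min_le[OF fin]) simp
  have "0 < w l + e * v l" for l
  proof -
    have wl: "w l > 0" using w by (simp add: C0_def)
    have "e * \<bar>v l\<bar> \<le> w l / (\<bar>v l\<bar> + 1) * \<bar>v l\<bar>" by (rule mult_right_mono[OF ele]) simp
    also have "\<dots> < w l" using wl by (simp add: field_simps)
    finally have "e * \<bar>v l\<bar> < w l" .
    moreover have "- (e * \<bar>v l\<bar>) \<le> e * v l" using mult_left_mono[of "- \<bar>v l\<bar>" "v l" e] epos by simp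
    ultimately show ?thesis by linarith
  qed
  then show "\<exists>e>0. (\<lambda>l. w l + e * v l) \<in> C0" using epos by (auto simp: C0_def)
qed

lemma C0_ne: "(C0 :: ('n::finite \<Rightarrow> real) set) \<noteq> {}"
  by (auto simp: C0_def intro!: exI[of _ "\<lambda>_. 1"])

lemma exists_pos:
  fixes a b :: "'n::finite \<Rightarrow>\<^sub>0 nat"
  assumes D: "\<forall>l. Poly_Mapping.lookup a l = 0 \<or> Poly_Mapping.lookup b l = 0" and a0: "a \<noteq> 0"
  shows "\<exists>w\<in>C0. dotw w a > dotw w b"
proof -
  define N where "N = 1 + dotw (\<lambda>_. 1) b"
  have N1: "N \<ge> 1" by (simp add: N_def dotw_def sum_nonneg)
  define w where "w = (\<lambda>l. if Poly_Mapping.lookup a l > 0 then N else 1)"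
  have wC: "w \<in> C0" using N1 by (simp add: w_def C0_def)
  have da: "dotw w a = N * (\<Sum>l\<in>UNIV. real (Poly_Mapping.lookup a l))"
    unfolding dotw_def sum_distrib_left by (rule sum.cong) (auto simp: w_def)
  have db: "dotw w b = dotw (\<lambda>_. 1) b"
    unfolding dotw_def
  proof (rule sum.cong)
    fix l
    show "w l * real (Poly_Mapping.lookup b l) = 1 * real (Poly_Mapping.lookup b l)"
      using D[rule_format, of l] by (auto simp: w_def)
  qed simp
  obtain l where l: "Poly_Mapping.lookup a l \<noteq> 0" using a0 by (metis lookup_zero poly_mapping_eqI)
  have "1 \<le> real (Poly_Mapping.lookup a l)" using l by simp
  also have "\<dots> \<le> (\<Sum>l\<in>UNIV. real (Poly_Mapping.lookup a l))" by (rule member_le_sum) auto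
  finally have S1: "1 \<le> (\<Sum>l\<in>UNIV. real (Poly_Mapping.lookup a l))" .
  have "N * 1 \<le> N * (\<Sum>l\<in>UNIV. real (Poly_Mapping.lookup a l))"
    by (rule mult_left_mono[OF S1]) (use N1 in simp)
  then have "N \<le> dotw w a" using da by simp
  moreover have "dotw w b < N" using db by (simp add: N_def)
  ultimately show ?thesis using wC by force
qed

lemma splits_C0:
  fixes a b :: "'n::finite \<Rightarrow>\<^sub>0 nat"
  assumes irr: "irreducible (Fb a b)" and a0: "a \<noteq> 0" and b0: "b \<noteq> 0"
  shows "splits C0 (dvec a b)"
proof -
  have D: "\<forall>l. Poly_Mapping.lookup a l = 0 \<or> Poly_Mapping.lookup b l = 0" using irr_disjoint[OF irr] by blast
  have D': "\<forall>l. Poly_Mapping.lookup b l = 0 \<or> Poly_Mapping.lookup a l = 0" using D by meson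
  obtain w where w: "w \<in> C0" "dotw w a > dotw w b" using exists_pos[OF D a0] by blast
  obtain w' where w': "w' \<in> C0" "dotw w' b > dotw w' a" using exists_pos[OF D' b0] by blast
  show ?thesis unfolding splits_def using w w' by (auto simp: ipw_dvec)
qed

lemma UC_C0_minimal:
  fixes p :: "'n::finite intpoly"
  shows "UC C0 (Poly_Mapping.keys p) \<subseteq> minimal_monomials p"
proof
  fix \<beta> assume "\<beta> \<in> UC C0 (Poly_Mapping.keys p)"
  then obtain w where w: "w \<in> C0" "\<beta> \<in> argm w (Poly_Mapping.keys p)" by (auto simp: UC_def)
  have nz: "Poly_Mapping.lookup p \<beta> \<noteq> 0" using w(2) by (auto simp: argm_def in_keys_iff)
  have "\<not> (\<exists>\<beta>'. \<beta>' \<noteq> \<beta> \<and> Poly_Mapping.lookup p \<beta>' \<noteq> 0 \<and> le_comp \<beta>' \<beta>)"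
  proof
    assume "\<exists>\<beta>'. \<beta>' \<noteq> \<beta> \<and> Poly_Mapping.lookup p \<beta>' \<noteq> 0 \<and> le_comp \<beta>' \<beta>"
    then obtain \<beta>' where b': "\<beta>' \<noteq> \<beta>" "Poly_Mapping.lookup p \<beta>' \<noteq> 0" "le_comp \<beta>' \<beta>" by blast
    obtain l where l: "Poly_Mapping.lookup \<beta>' l \<noteq> Poly_Mapping.lookup \<beta> l" using b'(1) by (meson poly_mapping_eqI)
    have le: "\<forall>i. Poly_Mapping.lookup \<beta>' i \<le> Poly_Mapping.lookup \<beta> i" using b'(3) by (simp add: le_comp_def)
    have wpos: "\<forall>i. 0 < w i" using w(1) by (simp add: C0_def)
    have "dotw w \<beta>' < dotw w \<beta>" unfolding dotw_def
    proof (rule sum_strict_mono_ex1)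
      show "finite (UNIV :: 'n set)" by simp
      show "\<forall>i\<in>UNIV. w i * real (Poly_Mapping.lookup \<beta>' i) \<le> w i * real (Poly_Mapping.lookup \<beta> i)"
        using le wpos by (simp add: less_imp_le)
      show "\<exists>i\<in>UNIV. w i * real (Poly_Mapping.lookup \<beta>' i) < w i * real (Poly_Mapping.lookup \<beta> i)"
        using le[rule_format, of l] l wpos by (intro bexI[of _ l]) simp_all
    qed
    moreover have "\<beta>' \<in> Poly_Mapping.keys p" using b'(2) by (simp add: in_keys_iff)
    ultimately show False using w(2) by (auto simp: argm_def)
  qed
  then show "\<beta> \<in> minimal_monomials p" using nz by (simp add: minimal_monomials_def)
qed

lemma sum_nonzero:
  fixes J :: "'j set" and e :: "'j \<Rightarrow> int" and \<alpha> :: "'j \<Rightarrow> ('n \<Rightarrow>\<^sub>0 nat)"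
  assumes finJ: "finite J" and neJ: "J \<noteq> {}"
    and e_pm: "\<And>j. j \<in> J \<Longrightarrow> e j = 1 \<or> e j = -1"
    and sep: "\<And>j j'. j \<in> J \<Longrightarrow> j' \<in> J \<Longrightarrow> e j \<noteq> e j' \<Longrightarrow> \<alpha> j \<noteq> \<alpha> j'"
  shows "(\<Sum>j\<in>J. Poly_Mapping.single (\<alpha> j) (e j)) \<noteq> 0"
proof -
  obtain j0 where j0: "j0 \<in> J" using neJ by blast
  let ?J0 = "{j\<in>J. \<alpha> j = \<alpha> j0}"
  have "Poly_Mapping.lookup (\<Sum>j\<in>J. Poly_Mapping.single (\<alpha> j) (e j)) (\<alpha> j0) = (\<Sum>j\<in>J. if \<alpha> j = \<alpha> j0 then e j else 0)"
    by (simp add: lookup_sum lookup_single when_def)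
  also have "\<dots> = (\<Sum>j\<in>?J0. e j)" using finJ by (simp add: sum.inter_filter)
  also have "\<dots> = (\<Sum>j\<in>?J0. e j0)" using sep j0 by (intro sum.cong) auto
  also have "\<dots> = of_nat (card ?J0) * e j0" by simp
  finally have L: "Poly_Mapping.lookup (\<Sum>j\<in>J. Poly_Mapping.single (\<alpha> j) (e j)) (\<alpha> j0) = of_nat (card ?J0) * e j0" .
  have "card ?J0 \<noteq> 0" using finJ j0 by (auto simp: card_eq_0_iff)
  moreover have "e j0 \<noteq> 0" using e_pm[OF j0] by auto
  ultimately have "Poly_Mapping.lookup (\<Sum>j\<in>J. Poly_Mapping.single (\<alpha> j) (e j)) (\<alpha> j0) \<noteq> 0" unfolding L by simp
  then show ?thesis by auto
qed

theorem theorem3p12: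
  fixes k :: nat
    and l0 l1 :: "nat \<Rightarrow> ('n::finite \<Rightarrow>\<^sub>0 nat)"
    and J :: "'j set" and e :: "'j \<Rightarrow> int" and \<alpha> :: "'j \<Rightarrow> ('n \<Rightarrow>\<^sub>0 nat)"
  assumes irred: "\<And>i. i \<in> {1..k} \<Longrightarrow>
      irreducible (Poly_Mapping.single (l0 i) (1::int) - Poly_Mapping.single (l1 i) 1)"
    and distinct: "inj_on (\<lambda>i. Poly_Mapping.single (l0 i) (1::int) - Poly_Mapping.single (l1 i) 1) {1..k}"
    and nz0: "\<And>i. i \<in> {1..k} \<Longrightarrow> l0 i \<noteq> 0"
    and nz1: "\<And>i. i \<in> {1..k} \<Longrightarrow> l1 i \<noteq> 0"
    and finJ: "finite J" and neJ: "J \<noteq> {}"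
    and e_pm: "\<And>j. j \<in> J \<Longrightarrow> e j = 1 \<or> e j = -1"
    and sep: "\<And>j j'. j \<in> J \<Longrightarrow> j' \<in> J \<Longrightarrow> e j \<noteq> e j' \<Longrightarrow> \<alpha> j \<noteq> \<alpha> j'"
  shows "k + 1 \<le> card (minimal_monomials
           ((\<Prod>i=1..k. Poly_Mapping.single (l0 i) (1::int) - Poly_Mapping.single (l1 i) 1)
            * (\<Sum>j\<in>J. Poly_Mapping.single (\<alpha> j) (e j))))"
proof -
  let ?g = "\<Sum>j\<in>J. Poly_Mapping.single (\<alpha> j) (e j)"
  let ?I = "{1..k}"
  have irr: "\<And>i. i \<in> ?I \<Longrightarrow> irreducible (Fb (l0 i) (l1 i))" using irred by (simp add: Fb_def)
  have g0: "?g \<noteq> 0" by (rule sum_nonzero[OF finJ neJ e_pm sep])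
  have ne: "\<forall>i\<in>?I. l0 i \<noteq> l1 i" using irr_ne[OF irr] by blast
  have pw: "\<forall>i\<in>?I. \<forall>j\<in>?I. (l0 i = l0 j \<and> l1 i = l1 j) \<or> (l0 i = l1 j \<and> l1 i = l0 j) \<or>
              (\<exists>v. ipw v (dvec (l0 i) (l1 i)) = 0 \<and> ipw v (dvec (l0 j) (l1 j)) \<noteq> 0)"
  proof (intro ballI)
    fix i j assume i: "i \<in> ?I" and j: "j \<in> ?I"
    show "(l0 i = l0 j \<and> l1 i = l1 j) \<or> (l0 i = l1 j \<and> l1 i = l0 j) \<or>
              (\<exists>v. ipw v (dvec (l0 i) (l1 i)) = 0 \<and> ipw v (dvec (l0 j) (l1 j)) \<noteq> 0)"
      by (rule pairwise[OF irr[OF i] irr[OF j] nz0[OF i] nz1[OF i] nz0[OF j] nz1[OF j]])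
  qed
  have main: "1 + card {i\<in>?I. splits C0 (dvec (l0 i) (l1 i))}
     \<le> card (UC C0 (Poly_Mapping.keys ((\<Prod>i\<in>?I. Fb (l0 i) (l1 i)) * ?g)))"
    using mainG[OF finite_atLeastAtMost ne pw, rule_format, OF cone_C0 C0_ne g0] by simp
  have "{i\<in>?I. splits C0 (dvec (l0 i) (l1 i))} = ?I"
    using splits_C0[OF irr nz0 nz1] by auto
  then have main': "1 + k \<le> card (UC C0 (Poly_Mapping.keys ((\<Prod>i\<in>?I. Fb (l0 i) (l1 i)) * ?g)))"
    using main by simp
  have peq: "(\<Prod>i=1..k. Poly_Mapping.single (l0 i) (1::int) - Poly_Mapping.single (l1 i) 1) = (\<Prod>i\<in>?I. Fb (l0 i) (l1 i))"
    by (simp add: Fb_def)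
  let ?p = "(\<Prod>i\<in>?I. Fb (l0 i) (l1 i)) * ?g"
  have finM: "finite (minimal_monomials ?p)"
    by (rule finite_subset[of _ "Poly_Mapping.keys ?p"]) (auto simp: minimal_monomials_def in_keys_iff)
  have "card (UC C0 (Poly_Mapping.keys ?p)) \<le> card (minimal_monomials ?p)"
    by (rule card_mono[OF finM UC_C0_minimal])
  then show ?thesis unfolding peq using main' by simp
qed

end
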